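(* Let $n\ge1$ and let $\mathcal S_n\subset\{0,1\}^{n\times n}$ be the set of adjacency matrices of simple graphs on $n$ nodes. (i) For every directed multigraph with output pair $H=(V,E,(a,b))$ with $a\ne b$ and $|E|\le4$, and every $\varepsilon>0$, there is a PPGN++ network $F$ with $\max_{X\in\mathcal S_n}\max_{i,j}|F(X)_{ij}-P_H(X)_{ij}|<\varepsilon$. (ii) For every such $H$ with $a=b$ and $|E|\le5$, and every $\varepsilon>0$, there is a PPGN++ network $F$ with $\max_{X\in\mathcal S_n}\max_{i}|F(X)_{ii}-P_H(X)_{ii}|<\varepsilon$. (iii) For every such $H$ with $a=b$ and $|E|\le2$, and every $\varepsilon>0$, there is an MPNN $F$ with $\max_{X\in\mathcal S_n}\max_i|F(X)_i-P_H(X)_{ii}|<\varepsilon$. (In the paper's terminology: PPGN++ is at least 4 edge polynomial expressive and 5 node polynomial expressive, and MPNN is at least 2 node polynomial expressive.)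
   Context: A directed multigraph with output pair is $H=(V,E,(a,b))$ with $V=[m]$, $E$ a multiset of ordered pairs (loops and parallel edges allowed), $a,b\in V$ not necessarily distinct (red edge, not in $E$). $P_H(X)_{i_a,i_b}=\sum_{j\in[n]^m,\,j_a=i_a,\,j_b=i_b}\prod_{(r,s)\in E}X_{j_r,j_s}$ (with multiplicity, empty product $=1$), off-diagonal entries $0$ if $a=b$. A simple graph adjacency matrix is symmetric, 0/1, with zero diagonal. MLPs are finite-width feedforward networks with a continuous non-polynomial activation. MPNN: $Y^{(0)}=\mathbf 1\in\mathbb R^{n\times1}$, $Y^{(k+1)}=\mathtt m_k([XY^{(k)},\mathbf 1\mathbf 1^TY^{(k)},Y^{(k)}])$, brackets denoting concatenation along features and $\mathtt m_k$ an MLP applied to each row; output $F(X)\in\mathbb R^n$ is one feature column of the last layer. PPGN++: $Z^{(0)}=X\in\mathbb R^{n\times n\times1}$, $Z^{(k+1)}=\bar{\mathtt m}_3([\bar{\mathtt m}_1([Z^{(k)},Z^{(k)T}])\circledast\bar{\mathtt m}_2(Z^{(k)}),Z^{(k)}])$, with $Z^T$ transposing node indices channelwise, $\circledast$ channelwise matrix multiplication, and each $\bar{\mathtt m}_i$ a pair of MLPs, one applied to the feature vectors of diagonal entries and one to those of off-diagonal entries; output $F(X)\in\mathbb R^{n\times n}$ is one feature channel of the last layer. *)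

theory Defs
  imports Complex_Main "HOL-Library.Multiset" "HOL-Library.FuncSet" "HOL-Computational_Algebra.Polynomial"
begin

(* Vectors of dimension d are functions nat => real, only indices < d matter.
   Nodes are 0..<n, vertices of H are 0..<m. *)

definition non_polynomial :: "(real \<Rightarrow> real) \<Rightarrow> bool" where
  "non_polynomial \<sigma> \<longleftrightarrow> \<not> (\<exists>p :: real poly. \<forall>x. \<sigma> x = poly p x)"

definition is_affine :: "nat \<Rightarrow> nat \<Rightarrow> ((nat \<Rightarrow> real) \<Rightarrow> (nat \<Rightarrow> real)) \<Rightarrow> bool" where
  "is_affine d e f \<longleftrightarrow> (\<exists>W c. \<forall>x. f x = (\<lambda>i. if i < e then (\<Sum>j<d. W i j * x j) + c i else 0))"

inductive mlp :: "(real \<Rightarrow> real) \<Rightarrow> nat \<Rightarrow> nat \<Rightarrow> ((nat \<Rightarrow> real) \<Rightarrow> (nat \<Rightarrow> real)) \<Rightarrow> bool"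
  for \<sigma> where
  mlp_affine: "is_affine d e f \<Longrightarrow> mlp \<sigma> d e f"
| mlp_layer: "is_affine d h g \<Longrightarrow> mlp \<sigma> h e f \<Longrightarrow> mlp \<sigma> d e (\<lambda>x. f (\<lambda>i. \<sigma> (g x i)))"

(* Homomorphism polynomial P_H(X)_{i,j} of H = ({0..<m}, E, (a,b)) on n-node matrices *)
definition hom_poly :: "nat \<Rightarrow> nat \<Rightarrow> (nat \<times> nat) multiset \<Rightarrow> nat \<Rightarrow> nat
    \<Rightarrow> (nat \<Rightarrow> nat \<Rightarrow> real) \<Rightarrow> nat \<Rightarrow> nat \<Rightarrow> real" where
  "hom_poly n m E a b X i j =
     (if a = b \<and> i \<noteq> j then 0 else
       (\<Sum>\<phi> \<in> {\<phi> \<in> PiE {..<m} (\<lambda>_. {..<n}). \<phi> a = i \<and> \<phi> b = j}.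
          prod_mset (image_mset (\<lambda>e. X (\<phi> (fst e)) (\<phi> (snd e))) E)))"

definition is_multigraph_output :: "nat \<Rightarrow> (nat \<times> nat) multiset \<Rightarrow> nat \<Rightarrow> nat \<Rightarrow> bool" where
  "is_multigraph_output m E a b \<longleftrightarrow> a < m \<and> b < m \<and> set_mset E \<subseteq> {..<m} \<times> {..<m}"

definition simple_adj :: "nat \<Rightarrow> (nat \<Rightarrow> nat \<Rightarrow> real) set" where
  "simple_adj n = {X. (\<forall>i j. i < n \<and> j < n \<longrightarrow> X i j \<in> {0, 1} \<and> X i j = X j i)
                     \<and> (\<forall>i. X i i = 0)
                     \<and> (\<forall>i j. \<not> (i < n \<and> j < n) \<longrightarrow> X i j = 0)}"

definition mpnn_concat :: "nat \<Rightarrow> nat \<Rightarrow> (nat \<Rightarrow> nat \<Rightarrow> real) \<Rightarrow> (nat \<Rightarrow> nat \<Rightarrow> real)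
    \<Rightarrow> nat \<Rightarrow> (nat \<Rightarrow> real)" where
  "mpnn_concat n d X Y i = (\<lambda>c. if c < d then (\<Sum>j<n. X i j * Y j c)
       else if c < 2 * d then (\<Sum>j<n. Y j (c - d))
       else Y i (c - 2 * d))"

(* mpnn_layers \<sigma> n d Y : Y maps X to the current feature matrix (node i, feature c), d features *)
inductive mpnn_layers :: "(real \<Rightarrow> real) \<Rightarrow> nat \<Rightarrow> nat
    \<Rightarrow> ((nat \<Rightarrow> nat \<Rightarrow> real) \<Rightarrow> (nat \<Rightarrow> nat \<Rightarrow> real)) \<Rightarrow> bool" for \<sigma> n where
  mpnn_init: "mpnn_layers \<sigma> n 1 (\<lambda>X i c. if c = 0 then 1 else 0)"
| mpnn_step: "mpnn_layers \<sigma> n d Y \<Longrightarrow> mlp \<sigma> (3 * d) d' m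
     \<Longrightarrow> mpnn_layers \<sigma> n d' (\<lambda>X i. m (mpnn_concat n d X (Y X) i))"

definition mpnn :: "(real \<Rightarrow> real) \<Rightarrow> nat \<Rightarrow> ((nat \<Rightarrow> nat \<Rightarrow> real) \<Rightarrow> nat \<Rightarrow> real) \<Rightarrow> bool" where
  "mpnn \<sigma> n F \<longleftrightarrow> (\<exists>d Y c. mpnn_layers \<sigma> n d Y \<and> c < d \<and> F = (\<lambda>X i. Y X i c))"

(* tensors Z i j c : node pair (i,j), channel c *)
definition pair_apply :: "((nat \<Rightarrow> real) \<Rightarrow> (nat \<Rightarrow> real)) \<Rightarrow> ((nat \<Rightarrow> real) \<Rightarrow> (nat \<Rightarrow> real))
    \<Rightarrow> (nat \<Rightarrow> nat \<Rightarrow> nat \<Rightarrow> real) \<Rightarrow> (nat \<Rightarrow> nat \<Rightarrow> nat \<Rightarrow> real)" where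
  "pair_apply md mo Z = (\<lambda>i j. if i = j then md (Z i j) else mo (Z i j))"

definition concat_ch :: "nat \<Rightarrow> (nat \<Rightarrow> nat \<Rightarrow> nat \<Rightarrow> real) \<Rightarrow> (nat \<Rightarrow> nat \<Rightarrow> nat \<Rightarrow> real)
    \<Rightarrow> (nat \<Rightarrow> nat \<Rightarrow> nat \<Rightarrow> real)" where
  "concat_ch d A B = (\<lambda>i j c. if c < d then A i j c else B i j (c - d))"

definition transp_ch :: "(nat \<Rightarrow> nat \<Rightarrow> nat \<Rightarrow> real) \<Rightarrow> (nat \<Rightarrow> nat \<Rightarrow> nat \<Rightarrow> real)" where
  "transp_ch Z = (\<lambda>i j c. Z j i c)"

definition chmatmul :: "nat \<Rightarrow> (nat \<Rightarrow> nat \<Rightarrow> nat \<Rightarrow> real) \<Rightarrow> (nat \<Rightarrow> nat \<Rightarrow> nat \<Rightarrow> real)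
    \<Rightarrow> (nat \<Rightarrow> nat \<Rightarrow> nat \<Rightarrow> real)" where
  "chmatmul n A B = (\<lambda>i j c. \<Sum>k<n. A i k c * B k j c)"

inductive ppgn_layers :: "(real \<Rightarrow> real) \<Rightarrow> nat \<Rightarrow> nat
    \<Rightarrow> ((nat \<Rightarrow> nat \<Rightarrow> real) \<Rightarrow> (nat \<Rightarrow> nat \<Rightarrow> nat \<Rightarrow> real)) \<Rightarrow> bool" for \<sigma> n where
  ppgn_init: "ppgn_layers \<sigma> n 1 (\<lambda>X i j c. if c = 0 then X i j else 0)"
| ppgn_step: "ppgn_layers \<sigma> n d Z
     \<Longrightarrow> mlp \<sigma> (2 * d) e m1d \<Longrightarrow> mlp \<sigma> (2 * d) e m1o
     \<Longrightarrow> mlp \<sigma> d e m2d \<Longrightarrow> mlp \<sigma> d e m2o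
     \<Longrightarrow> mlp \<sigma> (e + d) d' m3d \<Longrightarrow> mlp \<sigma> (e + d) d' m3o
     \<Longrightarrow> ppgn_layers \<sigma> n d' (\<lambda>X. pair_apply m3d m3o
            (concat_ch e (chmatmul n (pair_apply m1d m1o (concat_ch d (Z X) (transp_ch (Z X))))
                                     (pair_apply m2d m2o (Z X)))
                         (Z X)))"

definition ppgn :: "(real \<Rightarrow> real) \<Rightarrow> nat \<Rightarrow> ((nat \<Rightarrow> nat \<Rightarrow> real) \<Rightarrow> nat \<Rightarrow> nat \<Rightarrow> real) \<Rightarrow> bool" where
  "ppgn \<sigma> n F \<longleftrightarrow> (\<exists>d Z c. ppgn_layers \<sigma> n d Z \<and> c < d \<and> F = (\<lambda>X i j. Z X i j c))"

end

theory Submission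
  imports Defs "HOL-Analysis.Analysis"
begin

lemma antideriv_ex:
  fixes g :: "real \<Rightarrow> real"
  assumes "continuous_on UNIV g"
  shows "\<exists>G. \<forall>x. DERIV G x :> g x"
proof -
  have "\<exists>F. \<forall>x :: real. -\<infinity> < ereal x \<longrightarrow> ereal x < \<infinity> \<longrightarrow> (F has_vector_derivative g x) (at x)"
    by (rule einterval_antiderivative) (use assms in \<open>auto simp: continuous_on_eq_continuous_at\<close>)
  then show ?thesis by (auto simp: has_real_derivative_iff_has_vector_derivative)
qed

lemma shift_deriv1: "\<forall>x. DERIV G x :> g x \<Longrightarrow> DERIV (\<lambda>b. G (c + b)) b :> g (c + b)"
  using DERIV_shift[of G "g (b + c)" b c] by (simp add: add.commute)
lemma shift_deriv2: "\<forall>x. DERIV G x :> g x \<Longrightarrow> DERIV (\<lambda>b. G (b + c)) b :> g (b + c)"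
  using DERIV_shift[of G "g (b + c)" b c] by (simp add: add.commute)

definition avg :: "real \<Rightarrow> (real \<Rightarrow> real) \<Rightarrow> real \<Rightarrow> real" where
  "avg h g x = ((SOME G. \<forall>x. DERIV G x :> g x) (x + h) - (SOME G. \<forall>x. DERIV G x :> g x) x) / h"

definition Dh :: "real \<Rightarrow> (real \<Rightarrow> real) \<Rightarrow> real \<Rightarrow> real" where
  "Dh h g x = (g (x + h) - g x) / h"

lemma avg_deriv:
  assumes "continuous_on UNIV g"
  shows "DERIV (avg h g) x :> Dh h g x"
proof -
  define G where "G = (SOME G. \<forall>x. DERIV G x :> g x)"
  have G: "\<forall>x. DERIV G x :> g x" unfolding G_def by (rule someI_ex[OF antideriv_ex[OF assms]])
  have e: "avg h g = (\<lambda>x. (G (x + h) - G x) / h)" unfolding avg_def G_def by auto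
  show ?thesis unfolding e Dh_def
    by (intro DERIV_cdivide DERIV_diff shift_deriv2 G[rule_format] G)
qed

lemma avg_cont: "continuous_on UNIV g \<Longrightarrow> continuous_on UNIV (avg h g)"
  by (meson DERIV_isCont avg_deriv continuous_at_imp_continuous_on)

lemma avg_rel:
  assumes "continuous_on UNIV g" "finite P" and rel: "\<forall>b. (\<Sum>p\<in>P. \<mu> p * g (a * p + b)) = 0"
  shows "(\<Sum>p\<in>P. \<mu> p * avg h g (a * p + b)) = 0"
proof -
  define G where "G = (SOME G. \<forall>x. DERIV G x :> g x)"
  have G: "\<forall>x. DERIV G x :> g x" unfolding G_def by (rule someI_ex[OF antideriv_ex[OF assms(1)]])
  have e: "avg h g = (\<lambda>x. (G (x + h) - G x) / h)" unfolding avg_def G_def by auto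
  define H where "H = (\<lambda>b. \<Sum>p\<in>P. \<mu> p * G (a * p + b))"
  have "DERIV H b :> (\<Sum>p\<in>P. \<mu> p * g (a * p + b))" for b
    unfolding H_def
    by (intro DERIV_sum DERIV_cmult shift_deriv1 G)
  then have "DERIV H b :> 0" for b using rel by simp
  then have c: "H x = H y" for x y by (meson DERIV_isconst_all)
  have "(\<Sum>p\<in>P. \<mu> p * avg h g (a * p + b)) = (H (b + h) - H b) / h"
    unfolding e H_def by (simp add: sum_divide_distrib[symmetric] sum_subtractf[symmetric] algebra_simps)
  also have "\<dots> = 0" using c[of "b+h" b] by simp
  finally show ?thesis .
qed

lemma avg_close:
  assumes "continuous_on UNIV g" "h > 0" and bd: "\<forall>y\<in>{x..x+r+h}. \<bar>g y - c\<bar> \<le> \<epsilon>"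
    and y: "y \<in> {x..x+r}"
  shows "\<bar>avg h g y - c\<bar> \<le> \<epsilon>"
proof -
  define G where "G = (SOME G. \<forall>x. DERIV G x :> g x)"
  have G: "\<forall>x. DERIV G x :> g x" unfolding G_def by (rule someI_ex[OF antideriv_ex[OF assms(1)]])
  have e: "avg h g = (\<lambda>x. (G (x + h) - G x) / h)" unfolding avg_def G_def by auto
  obtain z where z: "y < z" "z < y + h" "G (y + h) - G y = (y + h - y) * g z"
    using MVT2[of y "y+h" G g] G \<open>h > 0\<close> by auto
  have "avg h g y = g z" unfolding e using z(3) \<open>h>0\<close> by simp
  moreover have "z \<in> {x..x+r+h}" using z y by auto
  ultimately show ?thesis using bd by auto
qed

lemma Dh_pow_deriv:
  assumes "\<forall>y. DERIV f y :> f' y"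
  shows "DERIV ((Dh h ^^ k) f) x :> (Dh h ^^ k) f' x"
  using assms
proof (induction k arbitrary: x)
  case 0 then show ?case by simp
next
  case (Suc k)
  have d: "\<forall>y. DERIV ((Dh h ^^ k) f) y :> (Dh h ^^ k) f' y" using Suc by blast
  have "DERIV (\<lambda>x. ((Dh h ^^ k) f (x + h) - (Dh h ^^ k) f x) / h) x :>
        ((Dh h ^^ k) f' (x + h) - (Dh h ^^ k) f' x) / h"
    apply (rule DERIV_cdivide)
    apply (rule DERIV_diff)
    using DERIV_shift[of "(Dh h ^^ k) f" "(Dh h ^^ k) f' (x + h)" x h] d apply (simp add: add.commute)
    using d by blast
  then show ?case by (simp add: Dh_def[abs_def])
qed

lemma vandermonde_moment:
  fixes \<mu> :: "real \<Rightarrow> real"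
  assumes "finite P" "p0 \<in> P" "\<mu> p0 \<noteq> 0"
  shows "\<exists>k<card P. (\<Sum>p\<in>P. \<mu> p * p ^ k) \<noteq> 0"
proof (rule ccontr)
  assume A: "\<not> ?thesis"
  define q where "q = (\<Prod>p'\<in>P-{p0}. [:-p', 1:])"
  have "degree q \<le> sum (degree \<circ> (\<lambda>p'. [:-p', 1:])) (P-{p0})"
    unfolding q_def by (rule degree_prod_sum_le) (use assms in auto)
  also have "\<dots> = card (P - {p0})" by simp
  finally have dq: "degree q < card P" using assms
    by (metis card_Diff1_less le_less_trans)
  have pq: "poly q p = (\<Prod>p'\<in>P-{p0}. p - p')" for p unfolding q_def poly_prod by simp
  have "(\<Sum>p\<in>P. \<mu> p * poly q p) = \<mu> p0 * poly q p0 + (\<Sum>p\<in>P-{p0}. \<mu> p * poly q p)"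
    using assms by (simp add: sum.remove)
  moreover have "(\<Sum>p\<in>P-{p0}. \<mu> p * poly q p) = 0"
    by (intro sum.neutral) (use assms in \<open>auto simp: pq prod_zero_iff\<close>)
  ultimately have e1: "(\<Sum>p\<in>P. \<mu> p * poly q p) = \<mu> p0 * poly q p0" by simp
  have "poly q p0 \<noteq> 0" unfolding pq using assms by (subst prod_zero_iff) auto
  then have ne: "(\<Sum>p\<in>P. \<mu> p * poly q p) \<noteq> 0" using assms e1 by simp
  have "(\<Sum>p\<in>P. \<mu> p * poly q p) = (\<Sum>p\<in>P. \<Sum>i\<le>degree q. \<mu> p * (coeff q i * p ^ i))"
    unfolding poly_altdef by (simp add: sum_distrib_left)
  also have "\<dots> = (\<Sum>i\<le>degree q. coeff q i * (\<Sum>p\<in>P. \<mu> p * p ^ i))"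
    by (subst sum.swap) (simp add: sum_distrib_left algebra_simps)
  also have "\<dots> = 0"
    by (rule sum.neutral) (use A dq in auto)
  finally show False using ne by simp
qed

lemma lagrange_interp:
  fixes q :: "real poly"
  assumes "degree q < K"
  shows "poly q x = (\<Sum>i<K. poly q (real i) *
           ((\<Prod>j\<in>{..<K}-{i}. (x - real j)) / (\<Prod>j\<in>{..<K}-{i}. (real i - real j))))"
proof -
  define L where "L i = smult (1 / (\<Prod>j\<in>{..<K}-{i}. (real i - real j))) (\<Prod>j\<in>{..<K}-{i}. [:-real j, 1:])" for i
  define r where "r = (\<Sum>i<K. smult (poly q (real i)) (L i))"
  have pL: "poly (L i) x = (\<Prod>j\<in>{..<K}-{i}. (x - real j)) / (\<Prod>j\<in>{..<K}-{i}. (real i - real j))" for i x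
    unfolding L_def by (simp add: poly_prod)
  have K: "K \<ge> 1" using assms by simp
  have dL: "degree (L i) \<le> K - 1" if "i < K" for i
  proof -
    have "degree (L i) \<le> degree (\<Prod>j\<in>{..<K}-{i}. [:-real j, 1:])" unfolding L_def by (rule degree_smult_le)
    also have "\<dots> \<le> sum (degree \<circ> (\<lambda>j. [:-real j, 1:])) ({..<K}-{i})" by (rule degree_prod_sum_le) auto
    also have "\<dots> = K - 1" using that by simp
    finally show ?thesis .
  qed
  have dr: "degree r \<le> K - 1" unfolding r_def
    apply (rule degree_sum_le) apply simp apply (rule order.trans[OF degree_smult_le]) using dL by simp
  have ev: "poly (L i) (real l) = (if l = i then 1 else 0)" if "i < K" "l < K" for i l
  proof (cases "l = i")
    case True
    have "(\<Prod>j\<in>{..<K}-{i}. real i - real j) \<noteq> 0" by (subst prod_zero_iff) auto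
    then show ?thesis unfolding pL using True by simp
  next
    case False
    have "(\<Prod>j\<in>{..<K}-{i}. (real l - real j)) = 0"
      by (subst prod_zero_iff) (use that False in auto)
    then show ?thesis unfolding pL using False by simp
  qed
  have "q = r"
  proof (rule poly_eqI_degree[where A = "real ` {..<K}"])
    fix y assume "y \<in> real ` {..<K}"
    then obtain l where l: "l < K" "y = real l" by auto
    have "poly r y = (\<Sum>i<K. poly q (real i) * poly (L i) (real l))"
      unfolding r_def l by (simp add: poly_sum)
    also have "\<dots> = (\<Sum>i<K. if i = l then poly q (real l) else 0)"
      by (rule sum.cong) (use l ev in auto)
    also have "\<dots> = poly q y" using l by simp
    finally show "poly q y = poly r y" by simp
  next
    have "card (real ` {..<K}) = K" by (simp add: card_image)
    then show "degree q < card (real ` {..<K})" "degree r < card (real ` {..<K})"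
      using assms dr K by auto
  qed
  then have "poly q x = poly r x" by simp
  also have "\<dots> = (\<Sum>i<K. poly q (real i) * poly (L i) x)" unfolding r_def by (simp add: poly_sum)
  finally show ?thesis unfolding pL .
qed

lemma iter_avg_cont: "continuous_on UNIV g \<Longrightarrow> continuous_on UNIV ((avg h ^^ j) g)"
  by (induction j) (auto intro: avg_cont)

lemma iter_avg_rel:
  assumes "continuous_on UNIV g" "finite P" "\<forall>a b. (\<Sum>p\<in>P. \<mu> p * g (a * p + b)) = 0"
  shows "\<forall>a b. (\<Sum>p\<in>P. \<mu> p * (avg h ^^ j) g (a * p + b)) = 0"
proof (induction j)
  case 0 then show ?case using assms by simp
next
  case (Suc j) then show ?case using avg_rel[OF iter_avg_cont[OF assms(1)] assms(2)] by simp
qed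

lemma smoothed_poly:
  fixes g :: "real \<Rightarrow> real"
  assumes cont: "continuous_on UNIV g" and fin: "finite P" and p0: "p0 \<in> P" "\<mu> p0 \<noteq> 0"
    and rel: "\<forall>a b. (\<Sum>p\<in>P. \<mu> p * g (a * p + b)) = 0"
  shows "\<exists>q. degree q < card P \<and> (\<forall>x. (avg h ^^ card P) g x = poly q x)"
proof -
  define K where "K = card P"
  have K1: "K \<ge> 1" using fin p0 unfolding K_def by (metis One_nat_def Suc_leI card_gt_0_iff empty_iff)
  define F where "F j = (avg h ^^ j) g" for j
  define df where "df k = (Dh h ^^ k) (F (K - k))" for k
  have Fc: "continuous_on UNIV (F j)" for j unfolding F_def by (rule iter_avg_cont[OF cont])
  have chain: "DERIV (df k) x :> df (Suc k) x" if "k < K" for k x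
  proof -
    have e: "F (K - k) = avg h (F (K - Suc k))" unfolding F_def using that
      by (metis Suc_diff_Suc funpow.simps(2) o_apply)
    have "\<forall>y. DERIV (F (K - k)) y :> Dh h (F (K - Suc k)) y"
      unfolding e using avg_deriv[OF Fc] by blast
    then have "DERIV ((Dh h ^^ k) (F (K - k))) x :> (Dh h ^^ k) (Dh h (F (K - Suc k))) x"
      by (rule Dh_pow_deriv)
    then show ?thesis unfolding df_def by (simp add: funpow_Suc_right del: funpow.simps)
  qed
  have relk: "k \<le> K \<Longrightarrow> \<forall>a b. (\<Sum>p\<in>P. \<mu> p * p ^ k * df k (a * p + b)) = 0" for k
  proof (induction k)
    case 0
    then show ?case unfolding df_def F_def using iter_avg_rel[OF cont fin rel] by simp
  next
    case (Suc k)
    show ?case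
    proof (intro allI)
      fix a b
      have k: "k < K" using Suc by simp
      have z: "(\<lambda>a. \<Sum>p\<in>P. \<mu> p * p ^ k * df k (a * p + b)) = (\<lambda>a. 0)" using Suc by auto
      have "DERIV (\<lambda>a. \<Sum>p\<in>P. \<mu> p * p ^ k * df k (a * p + b)) a :>
              (\<Sum>p\<in>P. \<mu> p * p ^ k * (df (Suc k) (a * p + b) * p))"
      proof (intro DERIV_sum DERIV_cmult)
        fix p
        have "DERIV (\<lambda>a. a * p + b) a :> p" by (auto intro!: derivative_eq_intros)
        then show "DERIV (\<lambda>a. df k (a * p + b)) a :> df (Suc k) (a * p + b) * p"
          by (rule DERIV_chain2[OF chain[OF k]])
      qed
      then have "DERIV (\<lambda>a. 0) a :> (\<Sum>p\<in>P. \<mu> p * p ^ k * (df (Suc k) (a * p + b) * p))"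
        unfolding z .
      then have "(\<Sum>p\<in>P. \<mu> p * p ^ k * (df (Suc k) (a * p + b) * p)) = 0"
        using DERIV_unique DERIV_const by blast
      then show "(\<Sum>p\<in>P. \<mu> p * p ^ Suc k * df (Suc k) (a * p + b)) = 0"
        by (simp add: algebra_simps)
    qed
  qed
  obtain k where k: "k < K" "(\<Sum>p\<in>P. \<mu> p * p ^ k) \<noteq> 0"
    using vandermonde_moment[OF fin p0(1), of \<mu>] p0(2) unfolding K_def by blast
  have dk0: "df k x = 0" for x
  proof -
    have "(\<Sum>p\<in>P. \<mu> p * p ^ k * df k (0 * p + x)) = 0" using relk[of k] k by (metis less_imp_le)
    then have "(\<Sum>p\<in>P. \<mu> p * p ^ k) * df k x = 0" by (simp add: sum_distrib_right)
    then show ?thesis using k by simp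
  qed
  define d' where "d' m = (if m < k then df m else (\<lambda>x. 0))" for m
  have d'0: "d' 0 = F K"
  proof (cases "k = 0")
    case True
    then have "F K = (\<lambda>x. 0)" using dk0 unfolding df_def by auto
    then show ?thesis unfolding d'_def using True by simp
  next
    case False then show ?thesis unfolding d'_def df_def by simp
  qed
  have d'D: "\<forall>m x. DERIV (d' m) x :> d' (Suc m) x"
  proof (intro allI)
    fix m x
    show "DERIV (d' m) x :> d' (Suc m) x"
    proof (cases "Suc m < k")
      case True then show ?thesis unfolding d'_def using chain k by simp
    next
      case False
      show ?thesis
      proof (cases "Suc m = k")
        case True
        then have "DERIV (df m) x :> df (Suc m) x" using chain k by (metis Suc_lessD)
        then show ?thesis unfolding d'_def using True dk0 by simp
      next
        case False
        then show ?thesis unfolding d'_def using \<open>\<not> Suc m < k\<close> by simp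
      qed
    qed
  qed
  define c where "c m = d' m 0 / fact m" for m
  define q where "q = (\<Sum>m<k. monom (c m) m)"
  have Fq: "F K x = poly q x" for x
  proof -
    obtain t where "F K x = (\<Sum>m<k. (d' m 0 / fact m) * x ^ m) + (d' k t / fact k) * x ^ k"
      using Maclaurin_all_le[OF d'0 d'D, of x k] by blast
    then show ?thesis unfolding q_def c_def poly_sum poly_monom d'_def by simp
  qed
  have "degree q \<le> K - 1"
  proof (rule degree_le, intro allI impI)
    fix i assume "K - 1 < i"
    then have "i \<ge> k" using k by simp
    then show "coeff q i = 0" unfolding q_def coeff_sum coeff_monom by auto
  qed
  then have "degree q < K" using K1 by simp
  then show ?thesis using Fq unfolding K_def F_def by blast
qed

lemma avg_iter_close:
  assumes cont: "continuous_on UNIV g" and h: "h > 0"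
    and bd: "\<forall>y\<in>{x..x + real K * h}. \<bar>g y - g x\<bar> \<le> \<epsilon>"
  shows "\<bar>(avg h ^^ K) g x - g x\<bar> \<le> \<epsilon>"
proof -
  have "j \<le> K \<Longrightarrow> \<forall>y\<in>{x..x + real (K - j) * h}. \<bar>(avg h ^^ j) g y - g x\<bar> \<le> \<epsilon>" for j
  proof (induction j)
    case 0 then show ?case using bd by simp
  next
    case (Suc j)
    have e: "x + real (K - Suc j) * h + h = x + real (K - j) * h"
      using Suc(2) by (simp add: of_nat_diff algebra_simps)
    have "\<forall>y\<in>{x..x + real (K - Suc j) * h + h}. \<bar>(avg h ^^ j) g y - g x\<bar> \<le> \<epsilon>"
      unfolding e using Suc by simp
    then show ?case
      using avg_close[OF iter_avg_cont[OF cont, where h=h and j=j] h, of x "real (K - Suc j) * h" "g x" \<epsilon>] by simp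
  qed
  from this[of K] show ?thesis by simp
qed

lemma avg_conv:
  assumes cont: "continuous_on UNIV g"
  shows "(\<lambda>r. (avg (1 / real (Suc r)) ^^ K) g y) \<longlonglongrightarrow> g y"
proof (rule LIMSEQ_I)
  fix e :: real assume e: "e > 0"
  then obtain d where d: "d > 0" "\<forall>y'. dist y' y < d \<longrightarrow> dist (g y') (g y) < e / 2"
    using cont unfolding continuous_on_iff by (metis UNIV_I half_gt_zero)
  obtain N where N: "real K / d < real N" using reals_Archimedean2 by blast
  show "\<exists>no. \<forall>r\<ge>no. norm ((avg (1 / real (Suc r)) ^^ K) g y - g y) < e"
  proof (intro exI allI impI)
    fix r assume r: "N \<le> r"
    define h where "h = 1 / real (Suc r)"
    have h0: "h > 0" unfolding h_def by simp
    have "real K * h = real K / real (Suc r)" unfolding h_def by simp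
    also have "\<dots> < d"
    proof -
      have "real K < d * real N" using N d by (simp add: field_simps)
      also have "\<dots> \<le> d * real (Suc r)" using r d by simp
      finally show ?thesis by (simp add: field_simps)
    qed
    finally have Kh: "real K * h < d" .
    have "\<forall>y'\<in>{y..y + real K * h}. \<bar>g y' - g y\<bar> \<le> e / 2"
    proof
      fix y' assume "y' \<in> {y..y + real K * h}"
      then have "dist y' y < d" using Kh by (simp add: dist_real_def)
      then have "\<bar>g y' - g y\<bar> < e / 2" using d(2) by (simp add: dist_real_def)
      then show "\<bar>g y' - g y\<bar> \<le> e / 2" by simp
    qed
    from avg_iter_close[OF cont h0 this] e
    show "norm ((avg (1 / real (Suc r)) ^^ K) g y - g y) < e" unfolding h_def by simp
  qed
qed

lemma rel_poly:
  fixes g :: "real \<Rightarrow> real"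
  assumes cont: "continuous_on UNIV g" and fin: "finite P" and p0: "p0 \<in> P" "\<mu> p0 \<noteq> 0"
    and rel: "\<forall>a b. (\<Sum>p\<in>P. \<mu> p * g (a * p + b)) = 0"
  shows "\<exists>p. \<forall>x. g x = poly p x"
proof -
  define K where "K = card P"
  define Lx where "Lx i x = (\<Prod>j\<in>{..<K}-{i}. (x - real j)) / (\<Prod>j\<in>{..<K}-{i}. (real i - real j))" for i x
  define F where "F r = (avg (1 / real (Suc r)) ^^ K) g" for r
  have FL: "F r x = (\<Sum>i<K. F r (real i) * Lx i x)" for r x
  proof -
    obtain q where q: "degree q < K" "\<forall>x. F r x = poly q x"
      using smoothed_poly[OF cont fin p0 rel, of "1 / real (Suc r)"] unfolding F_def K_def by blast
    show ?thesis unfolding q(2)[rule_format] Lx_def by (rule lagrange_interp[OF q(1)])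
  qed
  have gL: "g x = (\<Sum>i<K. g (real i) * Lx i x)" for x
  proof (rule LIMSEQ_unique)
    show "(\<lambda>r. F r x) \<longlonglongrightarrow> g x" unfolding F_def by (rule avg_conv[OF cont])
    have "(\<lambda>r. \<Sum>i<K. F r (real i) * Lx i x) \<longlonglongrightarrow> (\<Sum>i<K. g (real i) * Lx i x)"
      by (intro tendsto_sum tendsto_mult_right) (unfold F_def, rule avg_conv[OF cont])
    moreover have "(\<lambda>r. \<Sum>i<K. F r (real i) * Lx i x) = (\<lambda>r. F r x)"
      by (rule ext, rule FL[symmetric])
    ultimately show "(\<lambda>r. F r x) \<longlonglongrightarrow> (\<Sum>i<K. g (real i) * Lx i x)" by simp
  qed
  define p where "p = (\<Sum>i<K. smult (g (real i) / (\<Prod>j\<in>{..<K}-{i}. (real i - real j)))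
                     (\<Prod>j\<in>{..<K}-{i}. [:-real j, 1:]))"
  have "poly p x = (\<Sum>i<K. g (real i) * Lx i x)" for x
    unfolding p_def Lx_def by (simp add: poly_sum poly_prod)
  then have "g x = poly p x" for x using gL[of x] by simp
  then show ?thesis by blast
qed

definition Rep :: "(real \<Rightarrow> real) \<Rightarrow> (real \<Rightarrow> real) \<Rightarrow> bool" where
  "Rep \<sigma> f \<longleftrightarrow> (\<exists>L c0. \<forall>t. f t = c0 + sum_list (map (\<lambda>(c,a,b). c * \<sigma> (a * t + b)) L))"

lemma Rep_add: "Rep \<sigma> f \<Longrightarrow> Rep \<sigma> g \<Longrightarrow> Rep \<sigma> (\<lambda>t. f t + g t)"
  unfolding Rep_def
proof (elim exE)
  fix L1 c1 L2 c2
  assume 1: "\<forall>t. f t = c1 + sum_list (map (\<lambda>(c,a,b). c * \<sigma> (a * t + b)) L1)"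
     and 2: "\<forall>t. g t = c2 + sum_list (map (\<lambda>(c,a,b). c * \<sigma> (a * t + b)) L2)"
  show "\<exists>L c0. \<forall>t. f t + g t = c0 + sum_list (map (\<lambda>(c,a,b). c * \<sigma> (a * t + b)) L)"
    by (rule exI[of _ "L1 @ L2"], rule exI[of _ "c1 + c2"]) (simp add: 1 2)
qed

lemma Rep_scale: "Rep \<sigma> f \<Longrightarrow> Rep \<sigma> (\<lambda>t. k * f t)"
  unfolding Rep_def
proof (elim exE)
  fix L1 c1
  assume 1: "\<forall>t. f t = c1 + sum_list (map (\<lambda>(c,a,b). c * \<sigma> (a * t + b)) L1)"
  have "sum_list (map (\<lambda>(c,a,b). c * \<sigma> (a * t + b)) (map (\<lambda>(c,a,b). (k * c, a, b)) L1))
        = k * sum_list (map (\<lambda>(c,a,b). c * \<sigma> (a * t + b)) L1)" for t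
    by (induction L1) (auto simp: algebra_simps)
  then show "\<exists>L c0. \<forall>t. k * f t = c0 + sum_list (map (\<lambda>(c,a,b). c * \<sigma> (a * t + b)) L)"
    by (intro exI[of _ "map (\<lambda>(c,a,b). (k * c, a, b)) L1"] exI[of _ "k * c1"]) (simp add: 1 algebra_simps)
qed

lemma Rep_const: "Rep \<sigma> (\<lambda>t. k)"
  unfolding Rep_def by (intro exI[of _ "[]"] exI[of _ k]) simp

lemma Rep_unit: "Rep \<sigma> (\<lambda>t. \<sigma> (a * t + b))"
  unfolding Rep_def by (intro exI[of _ "[(1,a,b)]"] exI[of _ 0]) simp

lemma Rep_sum: "finite S \<Longrightarrow> (\<forall>s\<in>S. Rep \<sigma> (F s)) \<Longrightarrow> Rep \<sigma> (\<lambda>t. \<Sum>s\<in>S. F s t)"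
proof (induction S rule: finite_induct)
  case empty then show ?case using Rep_const[of \<sigma> 0] by simp
next
  case (insert x S)
  then show ?case using Rep_add[of \<sigma> "F x" "\<lambda>t. \<Sum>s\<in>S. F s t"] by simp
qed

lemma Rep_all:
  assumes cont: "continuous_on UNIV \<sigma>" and np: "non_polynomial \<sigma>" and fin: "finite T"
  shows "\<exists>f. Rep \<sigma> f \<and> (\<forall>t\<in>T. f t = y t)"
  using fin
proof (induction T arbitrary: y rule: finite_induct)
  case empty then show ?case using Rep_const by blast
next
  case (insert t T)
  show ?case
  proof (cases "\<exists>f. Rep \<sigma> f \<and> (\<forall>s\<in>T. f s = 0) \<and> f t \<noteq> 0")
    case True
    then obtain f where f: "Rep \<sigma> f" "\<forall>s\<in>T. f s = 0" "f t \<noteq> 0" by blast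
    obtain g where g: "Rep \<sigma> g" "\<forall>s\<in>T. g s = y s" using insert.IH by blast
    define k where "k = (y t - g t) / f t"
    have "Rep \<sigma> (\<lambda>x. g x + k * f x)" by (intro Rep_add Rep_scale f g)
    moreover have "\<forall>s\<in>insert t T. g s + k * f s = y s"
      using f g unfolding k_def by auto
    ultimately show ?thesis by blast
  next
    case False
    have "\<forall>s\<in>T. \<exists>e. Rep \<sigma> e \<and> (\<forall>s'\<in>T. e s' = (if s' = s then 1 else 0))"
    proof
      fix s assume "s \<in> T"
      show "\<exists>e. Rep \<sigma> e \<and> (\<forall>s'\<in>T. e s' = (if s' = s then 1 else 0))"
        using insert.IH[of "\<lambda>s'. if s' = s then 1 else 0"] by blast
    qed
    then obtain e where e: "\<forall>s\<in>T. Rep \<sigma> (e s) \<and> (\<forall>s'\<in>T. e s s' = (if s' = s then 1 else 0))"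
      by metis
    have key: "f t = (\<Sum>s\<in>T. f s * e s t)" if f: "Rep \<sigma> f" for f
    proof -
      define h where "h x = f x + (-1) * (\<Sum>s\<in>T. f s * e s x)" for x
      have "Rep \<sigma> h" unfolding h_def
        by (intro Rep_add Rep_scale f Rep_sum insert.hyps ballI) (use e in auto)
      moreover have "\<forall>s\<in>T. h s = 0"
      proof
        fix s' assume s': "s' \<in> T"
        have "(\<Sum>s\<in>T. f s * e s s') = (\<Sum>s\<in>T. if s = s' then f s' else 0)"
          by (rule sum.cong) (use e s' in auto)
        also have "\<dots> = f s'" using s' insert.hyps by simp
        finally show "h s' = 0" unfolding h_def by simp
      qed
      ultimately have "h t = 0" using False by blast
      then show ?thesis unfolding h_def by simp
    qed
    define \<mu> where "\<mu> p = (if p = t then 1 else - e p t)" for p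
    have rel: "\<forall>a b. (\<Sum>p\<in>insert t T. \<mu> p * \<sigma> (a * p + b)) = 0"
    proof (intro allI)
      fix a b
      have "(\<Sum>p\<in>insert t T. \<mu> p * \<sigma> (a * p + b)) = \<sigma> (a * t + b) + (\<Sum>p\<in>T. \<mu> p * \<sigma> (a * p + b))"
        using insert.hyps unfolding \<mu>_def by simp
      also have "(\<Sum>p\<in>T. \<mu> p * \<sigma> (a * p + b)) = - (\<Sum>p\<in>T. \<sigma> (a * p + b) * e p t)"
        unfolding \<mu>_def using insert.hyps by (auto simp: sum_negf[symmetric] intro!: sum.cong)
      also have "(\<Sum>p\<in>T. \<sigma> (a * p + b) * e p t) = \<sigma> (a * t + b)"
        using key[OF Rep_unit[of \<sigma> a b]] by simp
      finally show "(\<Sum>p\<in>insert t T. \<mu> p * \<sigma> (a * p + b)) = 0" by simp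
    qed
    have "\<exists>p. \<forall>x. \<sigma> x = poly p x"
      by (rule rel_poly[OF cont _ _ _ rel]) (use insert.hyps in \<open>auto simp: \<mu>_def\<close>)
    then show ?thesis using np unfolding non_polynomial_def by blast
  qed
qed

definition Rep' :: "(real \<Rightarrow> real) \<Rightarrow> (real \<times> real) list \<Rightarrow> (real \<Rightarrow> real) \<Rightarrow> bool" where
  "Rep' \<sigma> U f \<longleftrightarrow> (\<exists>cf c0. length cf = length U \<and>
     (\<forall>t. f t = c0 + sum_list (map2 (\<lambda>k (a,b). k * \<sigma> (a * t + b)) cf U)))"

lemma Rep_Rep': "Rep \<sigma> f \<Longrightarrow> \<exists>U. Rep' \<sigma> U f"
  unfolding Rep_def Rep'_def
proof (elim exE)
  fix L c0 assume L: "\<forall>t. f t = c0 + sum_list (map (\<lambda>(c,a,b). c * \<sigma> (a * t + b)) L)"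
  have "zip (map fst L) (map snd L) = L" by (rule zip_map_fst_snd)
  then have "map2 (\<lambda>k (a,b). k * \<sigma> (a * t + b)) (map fst L) (map snd L) = map (\<lambda>(c,a,b). c * \<sigma> (a * t + b)) L" for t
    by (metis (no_types, lifting) case_prod_beta' map_eq_conv prod.collapse)
  then show "\<exists>U cf c0. length cf = length U \<and> (\<forall>t. f t = c0 + sum_list (map2 (\<lambda>k (a,b). k * \<sigma> (a * t + b)) cf U))"
    using L by (intro exI[of _ "map snd L"] exI[of _ "map fst L"] exI[of _ c0]) simp
qed

lemma map2_zero: "sum_list (map2 (\<lambda>k (a,b). k * (\<sigma>::real\<Rightarrow>real) (a * t + b)) (replicate (length V) 0) V) = 0"
  by (induction V) auto


lemma Rep'_appR: "Rep' \<sigma> U f \<Longrightarrow> Rep' \<sigma> (U @ V) f"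
  unfolding Rep'_def
proof (elim exE conjE)
  fix cf c0 assume l: "length cf = length U" and f: "\<forall>t. f t = c0 + sum_list (map2 (\<lambda>k (a,b). k * \<sigma> (a * t + b)) cf U)"
  show "\<exists>cf c0. length cf = length (U @ V) \<and> (\<forall>t. f t = c0 + sum_list (map2 (\<lambda>k (a,b). k * \<sigma> (a * t + b)) cf (U @ V)))"
    by (intro exI[of _ "cf @ replicate (length V) 0"] exI[of _ c0]) (simp add: l f map2_zero)
qed

lemma Rep'_appL: "Rep' \<sigma> V f \<Longrightarrow> Rep' \<sigma> (U @ V) f"
  unfolding Rep'_def
proof (elim exE conjE)
  fix cf c0 assume l: "length cf = length V" and f: "\<forall>t. f t = c0 + sum_list (map2 (\<lambda>k (a,b). k * \<sigma> (a * t + b)) cf V)"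
  show "\<exists>cf c0. length cf = length (U @ V) \<and> (\<forall>t. f t = c0 + sum_list (map2 (\<lambda>k (a,b). k * \<sigma> (a * t + b)) cf (U @ V)))"
    by (intro exI[of _ "replicate (length U) 0 @ cf"] exI[of _ c0]) (simp add: l f map2_zero)
qed

lemma Rep'_common: "\<forall>c<(e::nat). Rep \<sigma> (F c) \<Longrightarrow> \<exists>U. \<forall>c<e. Rep' \<sigma> U (F c)"
proof (induction e)
  case 0 then show ?case by simp
next
  case (Suc e)
  then obtain U where U: "\<forall>c<e. Rep' \<sigma> U (F c)" by auto
  obtain V where V: "Rep' \<sigma> V (F e)" using Rep_Rep' Suc.prems by blast
  have "\<forall>c<Suc e. Rep' \<sigma> (U @ V) (F c)"
    using U V Rep'_appR Rep'_appL less_Suc_eq by metis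
  then show ?case by blast
qed

lemma sum_list_map2_nth:
  assumes "length cf = length U"
  shows "sum_list (map2 G cf U) = (\<Sum>q<length U. G (cf ! q) (U ! q))"
  using assms by (simp add: sum_list_sum_nth lessThan_atLeast0)

lemma inj_lin_exists:
  fixes D :: "(nat \<Rightarrow> real) set"
  assumes fin: "finite D" and res: "\<forall>x\<in>D. \<forall>c\<ge>d. x c = 0"
  shows "\<exists>w. inj_on (\<lambda>x. \<Sum>j<d. w j * x j) D"
proof -
  define pp where "pp = (\<lambda>(x::nat\<Rightarrow>real, y::nat\<Rightarrow>real). (\<Sum>j<d. monom (x j - y j) j))"
  define B where "B = (\<Union>xy\<in>{(x,y). x \<in> D \<and> y \<in> D \<and> x \<noteq> y}. {t. poly (pp xy) t = 0})"
  have nz: "pp (x, y) \<noteq> 0" if xyD: "x \<in> D" "y \<in> D" "x \<noteq> y" for x y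
  proof
    assume z: "pp (x, y) = 0"
    obtain j where j: "x j \<noteq> y j" using xyD(3) by (auto simp: fun_eq_iff)
    have "j < d" using res xyD j by (metis not_le)
    have "coeff (pp (x, y)) j = x j - y j" unfolding pp_def using \<open>j < d\<close>
      by (simp add: coeff_sum coeff_monom)
    then show False using z j by simp
  qed
  have "finite {(x,y). x \<in> D \<and> y \<in> D \<and> x \<noteq> y}"
    by (rule finite_subset[of _ "D \<times> D"]) (use fin in auto)
  then have "finite B" unfolding B_def using nz poly_roots_finite by auto
  then obtain \<tau> :: real where \<tau>: "\<tau> \<notin> B"
    by (metis UNIV_I ex_new_if_finite infinite_UNIV_char_0)
  have "inj_on (\<lambda>x. \<Sum>j<d. \<tau> ^ j * x j) D"
  proof (rule inj_onI, rule ccontr)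
    fix x y assume xy: "x \<in> D" "y \<in> D" "(\<Sum>j<d. \<tau> ^ j * x j) = (\<Sum>j<d. \<tau> ^ j * y j)" "x \<noteq> y"
    have "poly (pp (x, y)) \<tau> = (\<Sum>j<d. \<tau> ^ j * x j) - (\<Sum>j<d. \<tau> ^ j * y j)"
      unfolding pp_def by (simp add: poly_sum poly_monom sum_subtractf[symmetric] algebra_simps)
    then have "poly (pp (x, y)) \<tau> = 0" using xy by simp
    then show False using \<tau> xy unfolding B_def by auto
  qed
  then show ?thesis by blast
qed

definition restr :: "nat \<Rightarrow> (nat \<Rightarrow> real) \<Rightarrow> (nat \<Rightarrow> real)" where
  "restr k x = (\<lambda>c. if c < k then x c else 0)"

lemma mlp_interp:
  assumes cont: "continuous_on UNIV \<sigma>" and np: "non_polynomial \<sigma>"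
    and fin: "finite D" and res: "\<forall>x\<in>D. \<forall>c\<ge>d. x c = 0"
  shows "\<exists>f. mlp \<sigma> d e f \<and> (\<forall>x\<in>D. \<forall>c<e. f x c = G x c)"
proof -
  obtain w where w: "inj_on (\<lambda>x. \<Sum>j<d. w j * x j) D" using inj_lin_exists[OF fin res] by blast
  define lin where "lin x = (\<Sum>j<d. w j * x j)" for x
  define T where "T = lin ` D"
  have finT: "finite T" unfolding T_def using fin by simp
  have "\<forall>c<e. \<exists>f. Rep \<sigma> f \<and> (\<forall>t\<in>T. f t = G (inv_into D lin t) c)"
    by (intro allI impI, rule Rep_all[OF cont np finT])
  from choice_iff'[THEN iffD1, OF this]
  obtain F where F: "\<forall>c<e. Rep \<sigma> (F c) \<and> (\<forall>t\<in>T. F c t = G (inv_into D lin t) c)" by blast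
  obtain U where U: "\<forall>c<e. Rep' \<sigma> U (F c)" using Rep'_common[of e \<sigma> F] F by blast
  have "\<forall>c<e. \<exists>cf c0. length cf = length U \<and>
     (\<forall>t. F c t = c0 + sum_list (map2 (\<lambda>k (a,b). k * \<sigma> (a * t + b)) cf U))"
    using U unfolding Rep'_def by blast
  then have "\<forall>c<e. \<exists>z. length (fst z) = length U \<and>
     (\<forall>t. F c t = snd z + sum_list (map2 (\<lambda>k (a,b). k * \<sigma> (a * t + b)) (fst z) U))" by auto
  from choice_iff'[THEN iffD1, OF this] obtain z where z: "\<forall>c<e. length (fst (z c)) = length U \<and>
     (\<forall>t. F c t = snd (z c) + sum_list (map2 (\<lambda>k (a,b). k * \<sigma> (a * t + b)) (fst (z c)) U))" by blast
  define cf where "cf c = fst (z c)" for c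
  define c0 where "c0 c = snd (z c)" for c
  have cf: "\<forall>c<e. length (cf c) = length U \<and>
     (\<forall>t. F c t = c0 c + sum_list (map2 (\<lambda>k (a,b). k * \<sigma> (a * t + b)) (cf c) U))"
    using z unfolding cf_def c0_def by blast
  define h where "h = length U"
  define g where "g x = (\<lambda>q. if q < h then (\<Sum>j<d. (fst (U ! q) * w j) * x j) + snd (U ! q) else 0)" for x
  define fo where "fo y = (\<lambda>c. if c < e then (\<Sum>q<h. (if c < e then cf c ! q else 0) * y q) + c0 c else 0)" for y
  have ag: "is_affine d h g" unfolding is_affine_def g_def
    by (rule exI[of _ "\<lambda>q j. fst (U ! q) * w j"], rule exI[of _ "\<lambda>q. snd (U ! q)"]) simp
  have af: "is_affine h e fo" unfolding is_affine_def fo_def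
    by (rule exI[of _ "\<lambda>c q. if c < e then cf c ! q else 0"], rule exI[of _ c0]) simp
  define f where "f x = fo (\<lambda>i. \<sigma> (g x i))" for x
  have mf: "mlp \<sigma> d e f" unfolding f_def by (rule mlp_layer[OF ag mlp_affine[OF af]])
  have "f x c = G x c" if x: "x \<in> D" and c: "c < e" for x c
  proof -
    have gq: "g x q = fst (U ! q) * lin x + snd (U ! q)" if "q < h" for q
      unfolding g_def lin_def using that by (simp add: sum_distrib_left algebra_simps)
    have "f x c = (\<Sum>q<h. cf c ! q * \<sigma> (fst (U ! q) * lin x + snd (U ! q))) + c0 c"
      unfolding f_def fo_def using c gq by simp
    also have "\<dots> = F c (lin x)"
      using cf c sum_list_map2_nth[of "cf c" U "\<lambda>k (a,b). k * \<sigma> (a * lin x + b)"]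
      unfolding h_def by (simp add: case_prod_beta)
    also have "\<dots> = G (inv_into D lin (lin x)) c" using F c x unfolding T_def by blast
    also have "inv_into D lin (lin x) = x" using inv_into_f_f[OF w x] unfolding lin_def .
    finally show ?thesis .
  qed
  then show ?thesis using mf by blast
qed

lemma affine_restr: "is_affine d e f \<Longrightarrow> f x = f (restr d x)"
  unfolding is_affine_def restr_def by auto

lemma mlp_restr: "mlp \<sigma> d e f \<Longrightarrow> f x = f (restr d x)"
proof (induction arbitrary: x rule: mlp.induct)
  case (mlp_affine d e f) then show ?case by (rule affine_restr)
next
  case (mlp_layer d h g e f)
  then show ?case using affine_restr[OF mlp_layer(1), of x] by simp
qed

lemma affine_out: "is_affine d e f \<Longrightarrow> c \<ge> e \<Longrightarrow> f x c = 0"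
  unfolding is_affine_def by auto

lemma mlp_out: "mlp \<sigma> d e f \<Longrightarrow> c \<ge> e \<Longrightarrow> f x c = 0"
  by (induction arbitrary: x rule: mlp.induct) (auto intro: affine_out)

lemma finite_simple_adj: "finite (simple_adj n)"
proof -
  let ?F = "\<lambda>h i j. if i < n \<and> j < n then h (i, j) else (0::real)"
  have "simple_adj n \<subseteq> ?F ` PiE ({..<n} \<times> {..<n}) (\<lambda>_. {0, 1})"
  proof
    fix X assume X: "X \<in> simple_adj n"
    let ?h = "restrict (\<lambda>(i,j). X i j) ({..<n} \<times> {..<n})"
    have "?h \<in> PiE ({..<n} \<times> {..<n}) (\<lambda>_. {0, 1})" using X unfolding simple_adj_def by auto
    moreover have "X = ?F ?h" using X unfolding simple_adj_def by (auto simp: fun_eq_iff)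
    ultimately show "X \<in> ?F ` PiE ({..<n} \<times> {..<n}) (\<lambda>_. {0, 1})" by blast
  qed
  moreover have "finite (PiE ({..<n} \<times> {..<n}) (\<lambda>_. {0::real, 1}))" by (intro finite_PiE) auto
  ultimately show ?thesis by (meson finite_imageI finite_subset)
qed

lemma restr_eq: "(\<forall>c<k. v c = v' c) \<Longrightarrow> restr k v = restr k v'"
  unfolding restr_def by auto

lemma restr_restr[simp]: "restr k (restr k v) = restr k v"
  unfolding restr_def by auto

definition layerT :: "nat \<Rightarrow> nat \<Rightarrow> nat \<Rightarrow> ((nat \<Rightarrow> real) \<Rightarrow> (nat \<Rightarrow> real)) \<Rightarrow> ((nat \<Rightarrow> real) \<Rightarrow> (nat \<Rightarrow> real))
  \<Rightarrow> ((nat \<Rightarrow> real) \<Rightarrow> (nat \<Rightarrow> real)) \<Rightarrow> ((nat \<Rightarrow> real) \<Rightarrow> (nat \<Rightarrow> real))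
  \<Rightarrow> ((nat \<Rightarrow> real) \<Rightarrow> (nat \<Rightarrow> real)) \<Rightarrow> ((nat \<Rightarrow> real) \<Rightarrow> (nat \<Rightarrow> real))
  \<Rightarrow> (nat \<Rightarrow> nat \<Rightarrow> nat \<Rightarrow> real) \<Rightarrow> (nat \<Rightarrow> nat \<Rightarrow> nat \<Rightarrow> real)" where
  "layerT n e d m1d m1o m2d m2o m3d m3o T = pair_apply m3d m3o
            (concat_ch e (chmatmul n (pair_apply m1d m1o (concat_ch d T (transp_ch T)))
                                     (pair_apply m2d m2o T)) T)"

inductive psem :: "nat \<Rightarrow> nat \<Rightarrow> ((nat \<Rightarrow> nat \<Rightarrow> real) \<Rightarrow> (nat \<Rightarrow> nat \<Rightarrow> nat \<Rightarrow> real)) \<Rightarrow> bool" for n where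
  ps_init: "psem n 1 (\<lambda>X i j c. if c = 0 then X i j else 0)"
| ps_step: "psem n d Z \<Longrightarrow> psem n d' (\<lambda>X. layerT n e d (\<lambda>v. m1d (restr (2*d) v)) (\<lambda>v. m1o (restr (2*d) v))
      (\<lambda>v. m2d (restr d v)) (\<lambda>v. m2o (restr d v)) (\<lambda>v. m3d (restr (e+d) v)) (\<lambda>v. m3o (restr (e+d) v)) (Z X))"

lemma layer_agree:
  assumes T: "\<forall>i<n. \<forall>j<n. \<forall>c<d. T' i j c = T i j c"
    and mlps: "mlp \<sigma> (2*d) e f1d" "mlp \<sigma> (2*d) e f1o" "mlp \<sigma> d e f2d" "mlp \<sigma> d e f2o"
         "mlp \<sigma> (e+d) d' f3d" "mlp \<sigma> (e+d) d' f3o"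
    and H1: "\<forall>i<n. \<forall>j<n. \<forall>c<e. f1d (restr (2*d) (concat_ch d T (transp_ch T) i j)) c = m1d (restr (2*d) (concat_ch d T (transp_ch T) i j)) c
                              \<and> f1o (restr (2*d) (concat_ch d T (transp_ch T) i j)) c = m1o (restr (2*d) (concat_ch d T (transp_ch T) i j)) c"
    and H2: "\<forall>i<n. \<forall>j<n. \<forall>c<e. f2d (restr d (T i j)) c = m2d (restr d (T i j)) c \<and> f2o (restr d (T i j)) c = m2o (restr d (T i j)) c"
    and H3: "\<forall>i<n. \<forall>j<n. \<forall>c<d'.
       f3d (restr (e+d) (concat_ch e (chmatmul n (pair_apply (\<lambda>v. m1d (restr (2*d) v)) (\<lambda>v. m1o (restr (2*d) v)) (concat_ch d T (transp_ch T)))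
                                     (pair_apply (\<lambda>v. m2d (restr d v)) (\<lambda>v. m2o (restr d v)) T)) T i j)) c
     = m3d (restr (e+d) (concat_ch e (chmatmul n (pair_apply (\<lambda>v. m1d (restr (2*d) v)) (\<lambda>v. m1o (restr (2*d) v)) (concat_ch d T (transp_ch T)))
                                     (pair_apply (\<lambda>v. m2d (restr d v)) (\<lambda>v. m2o (restr d v)) T)) T i j)) c
     \<and> f3o (restr (e+d) (concat_ch e (chmatmul n (pair_apply (\<lambda>v. m1d (restr (2*d) v)) (\<lambda>v. m1o (restr (2*d) v)) (concat_ch d T (transp_ch T)))
                                     (pair_apply (\<lambda>v. m2d (restr d v)) (\<lambda>v. m2o (restr d v)) T)) T i j)) c
     = m3o (restr (e+d) (concat_ch e (chmatmul n (pair_apply (\<lambda>v. m1d (restr (2*d) v)) (\<lambda>v. m1o (restr (2*d) v)) (concat_ch d T (transp_ch T)))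
                                     (pair_apply (\<lambda>v. m2d (restr d v)) (\<lambda>v. m2o (restr d v)) T)) T i j)) c"
  shows "\<forall>i<n. \<forall>j<n. \<forall>c<d'. layerT n e d f1d f1o f2d f2o f3d f3o T' i j c =
      layerT n e d (\<lambda>v. m1d (restr (2*d) v)) (\<lambda>v. m1o (restr (2*d) v))
      (\<lambda>v. m2d (restr d v)) (\<lambda>v. m2o (restr d v)) (\<lambda>v. m3d (restr (e+d) v)) (\<lambda>v. m3o (restr (e+d) v)) T i j c"
proof (intro allI impI)
  fix i j c assume ij: "i < n" "j < n" and c: "c < d'"
  define A where "A = pair_apply (\<lambda>v. m1d (restr (2*d) v)) (\<lambda>v. m1o (restr (2*d) v)) (concat_ch d T (transp_ch T))"
  define B where "B = pair_apply (\<lambda>v. m2d (restr d v)) (\<lambda>v. m2o (restr d v)) T"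
  define A' where "A' = pair_apply f1d f1o (concat_ch d T' (transp_ch T'))"
  define B' where "B' = pair_apply f2d f2o T'"
  have rc: "restr (2*d) (concat_ch d T' (transp_ch T') i j) = restr (2*d) (concat_ch d T (transp_ch T) i j)"
    if "i < n" "j < n" for i j
    by (rule restr_eq) (use T that in \<open>auto simp: concat_ch_def transp_ch_def\<close>)
  have AA: "A' i j c = A i j c" if "i < n" "j < n" "c < e" for i j c
  proof -
    have "f1d (concat_ch d T' (transp_ch T') i j) c = f1d (restr (2*d) (concat_ch d T' (transp_ch T') i j)) c"
      using mlp_restr[OF mlps(1)] by metis
    moreover have "f1o (concat_ch d T' (transp_ch T') i j) c = f1o (restr (2*d) (concat_ch d T' (transp_ch T') i j)) c"
      using mlp_restr[OF mlps(2)] by metis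
    ultimately show ?thesis unfolding A'_def A_def pair_apply_def using rc[OF that(1,2)] H1 that by (cases "i = j") simp_all
  qed
  have BB: "B' i j c = B i j c" if "i < n" "j < n" "c < e" for i j c
  proof -
    have r: "restr d (T' i j) = restr d (T i j)" by (rule restr_eq) (use T that in auto)
    have "f2d (T' i j) c = f2d (restr d (T' i j)) c" using mlp_restr[OF mlps(3)] by metis
    moreover have "f2o (T' i j) c = f2o (restr d (T' i j)) c" using mlp_restr[OF mlps(4)] by metis
    ultimately show ?thesis unfolding B'_def B_def pair_apply_def using r H2 that by (cases "i = j") simp_all
  qed
  have MM: "chmatmul n A' B' i j c = chmatmul n A B i j c" if "i < n" "j < n" "c < e" for i j c
    unfolding chmatmul_def using AA BB that by (intro sum.cong) auto
  have r3: "restr (e+d) (concat_ch e (chmatmul n A' B') T' i j) = restr (e+d) (concat_ch e (chmatmul n A B) T i j)"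
    by (rule restr_eq) (use MM T ij in \<open>auto simp: concat_ch_def\<close>)
  have "f3d (concat_ch e (chmatmul n A' B') T' i j) c = f3d (restr (e+d) (concat_ch e (chmatmul n A' B') T' i j)) c"
    using mlp_restr[OF mlps(5)] by metis
  moreover have "f3o (concat_ch e (chmatmul n A' B') T' i j) c = f3o (restr (e+d) (concat_ch e (chmatmul n A' B') T' i j)) c"
    using mlp_restr[OF mlps(6)] by metis
  ultimately show "layerT n e d f1d f1o f2d f2o f3d f3o T' i j c =
      layerT n e d (\<lambda>v. m1d (restr (2*d) v)) (\<lambda>v. m1o (restr (2*d) v))
      (\<lambda>v. m2d (restr d v)) (\<lambda>v. m2o (restr d v)) (\<lambda>v. m3d (restr (e+d) v)) (\<lambda>v. m3o (restr (e+d) v)) T i j c"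
    unfolding layerT_def A'_def[symmetric] B'_def[symmetric] A_def[symmetric] B_def[symmetric]
    using r3 H3 ij c unfolding A_def B_def by (cases "i = j") (simp_all add: pair_apply_def)
qed

lemma psem_real:
  assumes cont: "continuous_on UNIV \<sigma>" and np: "non_polynomial \<sigma>"
  shows "psem n d Z \<Longrightarrow> \<exists>Z'. ppgn_layers \<sigma> n d Z' \<and> (\<forall>X\<in>simple_adj n. \<forall>i<n. \<forall>j<n. \<forall>c<d. Z' X i j c = Z X i j c)"
proof (induction rule: psem.induct)
  case ps_init
  show ?case by (rule exI, rule conjI, rule ppgn_init) auto
next
  case (ps_step d Z d' e m1d m1o m2d m2o m3d m3o)
  obtain Z' where Z': "ppgn_layers \<sigma> n d Z'" "\<forall>X\<in>simple_adj n. \<forall>i<n. \<forall>j<n. \<forall>c<d. Z' X i j c = Z X i j c"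
    using ps_step.IH by blast
  define I where "I = simple_adj n \<times> {..<n} \<times> {..<n}"
  have finI: "finite I" unfolding I_def using finite_simple_adj by simp
  define A where "A X = pair_apply (\<lambda>v. m1d (restr (2*d) v)) (\<lambda>v. m1o (restr (2*d) v)) (concat_ch d (Z X) (transp_ch (Z X)))" for X
  define B where "B X = pair_apply (\<lambda>v. m2d (restr d v)) (\<lambda>v. m2o (restr d v)) (Z X)" for X
  define D1 where "D1 = (\<lambda>(X,i,j). restr (2*d) (concat_ch d (Z X) (transp_ch (Z X)) i j)) ` I"
  define D2 where "D2 = (\<lambda>(X,i,j). restr d (Z X i j)) ` I"
  define D3 where "D3 = (\<lambda>(X,i,j). restr (e+d) (concat_ch e (chmatmul n (A X) (B X)) (Z X) i j)) ` I"
  have fin: "finite D1" "finite D2" "finite D3" unfolding D1_def D2_def D3_def using finI by auto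
  have res: "\<forall>x\<in>D1. \<forall>c\<ge>2*d. x c = 0" "\<forall>x\<in>D2. \<forall>c\<ge>d. x c = 0" "\<forall>x\<in>D3. \<forall>c\<ge>e+d. x c = 0"
    unfolding D1_def D2_def D3_def restr_def by auto
  obtain f1d where f1d: "mlp \<sigma> (2*d) e f1d" "\<forall>x\<in>D1. \<forall>c<e. f1d x c = m1d x c"
    using mlp_interp[OF cont np fin(1) res(1)] by blast
  obtain f1o where f1o: "mlp \<sigma> (2*d) e f1o" "\<forall>x\<in>D1. \<forall>c<e. f1o x c = m1o x c"
    using mlp_interp[OF cont np fin(1) res(1)] by blast
  obtain f2d where f2d: "mlp \<sigma> d e f2d" "\<forall>x\<in>D2. \<forall>c<e. f2d x c = m2d x c"
    using mlp_interp[OF cont np fin(2) res(2)] by blast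
  obtain f2o where f2o: "mlp \<sigma> d e f2o" "\<forall>x\<in>D2. \<forall>c<e. f2o x c = m2o x c"
    using mlp_interp[OF cont np fin(2) res(2)] by blast
  obtain f3d where f3d: "mlp \<sigma> (e+d) d' f3d" "\<forall>x\<in>D3. \<forall>c<d'. f3d x c = m3d x c"
    using mlp_interp[OF cont np fin(3) res(3)] by blast
  obtain f3o where f3o: "mlp \<sigma> (e+d) d' f3o" "\<forall>x\<in>D3. \<forall>c<d'. f3o x c = m3o x c"
    using mlp_interp[OF cont np fin(3) res(3)] by blast
  define Z'' where "Z'' X = layerT n e d f1d f1o f2d f2o f3d f3o (Z' X)" for X
  have "ppgn_layers \<sigma> n d' Z''"
    unfolding Z''_def layerT_def by (rule ppgn_step[OF Z'(1) f1d(1) f1o(1) f2d(1) f2o(1) f3d(1) f3o(1)])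
  moreover have "\<forall>i<n. \<forall>j<n. \<forall>c<d'. Z'' X i j c = layerT n e d (\<lambda>v. m1d (restr (2*d) v)) (\<lambda>v. m1o (restr (2*d) v))
      (\<lambda>v. m2d (restr d v)) (\<lambda>v. m2o (restr d v)) (\<lambda>v. m3d (restr (e+d) v)) (\<lambda>v. m3o (restr (e+d) v)) (Z X) i j c"
    if X: "X \<in> simple_adj n" for X
    unfolding Z''_def
  proof (rule layer_agree[OF _ f1d(1) f1o(1) f2d(1) f2o(1) f3d(1) f3o(1)])
    show "\<forall>i<n. \<forall>j<n. \<forall>c<d. Z' X i j c = Z X i j c" using Z'(2) X by blast
    have mem: "(X, i, j) \<in> I" if "i < n" "j < n" for i j unfolding I_def using X that by auto
    show "\<forall>i<n. \<forall>j<n. \<forall>c<e. f1d (restr (2*d) (concat_ch d (Z X) (transp_ch (Z X)) i j)) c = m1d (restr (2*d) (concat_ch d (Z X) (transp_ch (Z X)) i j)) c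
                              \<and> f1o (restr (2*d) (concat_ch d (Z X) (transp_ch (Z X)) i j)) c = m1o (restr (2*d) (concat_ch d (Z X) (transp_ch (Z X)) i j)) c"
    proof (intro allI impI)
      fix i j c assume "i < n" "j < n" "c < e"
      have "restr (2*d) (concat_ch d (Z X) (transp_ch (Z X)) i j) \<in> D1"
        unfolding D1_def by (rule image_eqI[of _ _ "(X,i,j)"]) (use mem[OF \<open>i<n\<close> \<open>j<n\<close>] in simp_all)
      then show "f1d (restr (2*d) (concat_ch d (Z X) (transp_ch (Z X)) i j)) c = m1d (restr (2*d) (concat_ch d (Z X) (transp_ch (Z X)) i j)) c
                              \<and> f1o (restr (2*d) (concat_ch d (Z X) (transp_ch (Z X)) i j)) c = m1o (restr (2*d) (concat_ch d (Z X) (transp_ch (Z X)) i j)) c"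
        using f1d(2) f1o(2) \<open>c < e\<close> by blast
    qed
    show "\<forall>i<n. \<forall>j<n. \<forall>c<e. f2d (restr d (Z X i j)) c = m2d (restr d (Z X i j)) c \<and> f2o (restr d (Z X i j)) c = m2o (restr d (Z X i j)) c"
    proof (intro allI impI)
      fix i j c assume "i < n" "j < n" "c < e"
      have "restr d (Z X i j) \<in> D2"
        unfolding D2_def by (rule image_eqI[of _ _ "(X,i,j)"]) (use mem[OF \<open>i<n\<close> \<open>j<n\<close>] in simp_all)
      then show "f2d (restr d (Z X i j)) c = m2d (restr d (Z X i j)) c \<and> f2o (restr d (Z X i j)) c = m2o (restr d (Z X i j)) c"
        using f2d(2) f2o(2) \<open>c < e\<close> by blast
    qed
    show "\<forall>i<n. \<forall>j<n. \<forall>c<d'.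
       f3d (restr (e+d) (concat_ch e (chmatmul n (pair_apply (\<lambda>v. m1d (restr (2*d) v)) (\<lambda>v. m1o (restr (2*d) v)) (concat_ch d (Z X) (transp_ch (Z X))))
                                     (pair_apply (\<lambda>v. m2d (restr d v)) (\<lambda>v. m2o (restr d v)) (Z X))) (Z X) i j)) c
     = m3d (restr (e+d) (concat_ch e (chmatmul n (pair_apply (\<lambda>v. m1d (restr (2*d) v)) (\<lambda>v. m1o (restr (2*d) v)) (concat_ch d (Z X) (transp_ch (Z X))))
                                     (pair_apply (\<lambda>v. m2d (restr d v)) (\<lambda>v. m2o (restr d v)) (Z X))) (Z X) i j)) c
     \<and> f3o (restr (e+d) (concat_ch e (chmatmul n (pair_apply (\<lambda>v. m1d (restr (2*d) v)) (\<lambda>v. m1o (restr (2*d) v)) (concat_ch d (Z X) (transp_ch (Z X))))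
                                     (pair_apply (\<lambda>v. m2d (restr d v)) (\<lambda>v. m2o (restr d v)) (Z X))) (Z X) i j)) c
     = m3o (restr (e+d) (concat_ch e (chmatmul n (pair_apply (\<lambda>v. m1d (restr (2*d) v)) (\<lambda>v. m1o (restr (2*d) v)) (concat_ch d (Z X) (transp_ch (Z X))))
                                     (pair_apply (\<lambda>v. m2d (restr d v)) (\<lambda>v. m2o (restr d v)) (Z X))) (Z X) i j)) c"
    proof (intro allI impI)
      fix i j c assume "i < n" "j < n" "c < d'"
      have "restr (e+d) (concat_ch e (chmatmul n (A X) (B X)) (Z X) i j) \<in> D3"
        unfolding D3_def by (rule image_eqI[of _ _ "(X,i,j)"]) (use mem[OF \<open>i<n\<close> \<open>j<n\<close>] in simp_all)
      then show "f3d (restr (e+d) (concat_ch e (chmatmul n (pair_apply (\<lambda>v. m1d (restr (2*d) v)) (\<lambda>v. m1o (restr (2*d) v)) (concat_ch d (Z X) (transp_ch (Z X))))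
                                     (pair_apply (\<lambda>v. m2d (restr d v)) (\<lambda>v. m2o (restr d v)) (Z X))) (Z X) i j)) c
     = m3d (restr (e+d) (concat_ch e (chmatmul n (pair_apply (\<lambda>v. m1d (restr (2*d) v)) (\<lambda>v. m1o (restr (2*d) v)) (concat_ch d (Z X) (transp_ch (Z X))))
                                     (pair_apply (\<lambda>v. m2d (restr d v)) (\<lambda>v. m2o (restr d v)) (Z X))) (Z X) i j)) c
     \<and> f3o (restr (e+d) (concat_ch e (chmatmul n (pair_apply (\<lambda>v. m1d (restr (2*d) v)) (\<lambda>v. m1o (restr (2*d) v)) (concat_ch d (Z X) (transp_ch (Z X))))
                                     (pair_apply (\<lambda>v. m2d (restr d v)) (\<lambda>v. m2o (restr d v)) (Z X))) (Z X) i j)) c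
     = m3o (restr (e+d) (concat_ch e (chmatmul n (pair_apply (\<lambda>v. m1d (restr (2*d) v)) (\<lambda>v. m1o (restr (2*d) v)) (concat_ch d (Z X) (transp_ch (Z X))))
                                     (pair_apply (\<lambda>v. m2d (restr d v)) (\<lambda>v. m2o (restr d v)) (Z X))) (Z X) i j)) c"
        using f3d(2) f3o(2) \<open>c < d'\<close> unfolding A_def B_def by blast
    qed
  qed
  ultimately show ?case by blast
qed

definition pcomp :: "nat \<Rightarrow> ((nat \<Rightarrow> nat \<Rightarrow> real) \<Rightarrow> (nat \<Rightarrow> nat \<Rightarrow> nat \<Rightarrow> real)) \<Rightarrow> nat
   \<Rightarrow> ((nat \<Rightarrow> nat \<Rightarrow> real) \<Rightarrow> nat \<Rightarrow> nat \<Rightarrow> real) \<Rightarrow> bool" where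
  "pcomp n Z d G \<longleftrightarrow> (\<exists>c<d. \<forall>X\<in>simple_adj n. \<forall>i<n. \<forall>j<n. Z X i j c = G X i j)"

definition extends :: "nat \<Rightarrow> ((nat \<Rightarrow> nat \<Rightarrow> real) \<Rightarrow> (nat \<Rightarrow> nat \<Rightarrow> nat \<Rightarrow> real)) \<Rightarrow> nat
   \<Rightarrow> ((nat \<Rightarrow> nat \<Rightarrow> real) \<Rightarrow> (nat \<Rightarrow> nat \<Rightarrow> nat \<Rightarrow> real)) \<Rightarrow> nat \<Rightarrow> bool" where
  "extends n Z d Z' d' \<longleftrightarrow> psem n d' Z' \<and> (\<forall>G. pcomp n Z d G \<longrightarrow> pcomp n Z' d' G)"

lemma extends_refl: "psem n d Z \<Longrightarrow> extends n Z d Z d"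
  unfolding extends_def by auto

lemma extends_trans: "extends n Z d Z' d' \<Longrightarrow> extends n Z' d' Z'' d'' \<Longrightarrow> extends n Z d Z'' d''"
  unfolding extends_def by auto

lemma pcomp_cong: "pcomp n Z d G \<Longrightarrow> (\<forall>X\<in>simple_adj n. \<forall>i<n. \<forall>j<n. G X i j = G' X i j) \<Longrightarrow> pcomp n Z d G'"
  unfolding pcomp_def by auto

lemma ext_pw:
  assumes "psem n d Z"
  shows "\<exists>Z'. psem n (Suc d) Z' \<and> (\<forall>X i j c. c < d \<longrightarrow> Z' X i j c = Z X i j c)
           \<and> (\<forall>X i j. Z' X i j d = (if i = j then fd else fo) (restr d (Z X i j)))"
proof -
  define m3d where "m3d v = (\<lambda>c. if c < d then v c else if c = d then fd v else 0)" for v :: "nat \<Rightarrow> real"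
  define m3o where "m3o v = (\<lambda>c. if c < d then v c else if c = d then fo v else 0)" for v :: "nat \<Rightarrow> real"
  define z :: "(nat \<Rightarrow> real) \<Rightarrow> (nat \<Rightarrow> real)" where "z v = (\<lambda>c. 0)" for v
  let ?Z' = "\<lambda>X. layerT n 0 d (\<lambda>v. z (restr (2*d) v)) (\<lambda>v. z (restr (2*d) v))
      (\<lambda>v. z (restr d v)) (\<lambda>v. z (restr d v)) (\<lambda>v. m3d (restr (0+d) v)) (\<lambda>v. m3o (restr (0+d) v)) (Z X)"
  have "psem n (Suc d) ?Z'" by (rule ps_step[OF assms])
  moreover have "?Z' X i j c = Z X i j c" if "c < d" for X i j c
    using that unfolding layerT_def pair_apply_def concat_ch_def m3d_def m3o_def restr_def by simp
  moreover have "?Z' X i j d = (if i = j then fd else fo) (restr d (Z X i j))" for X i j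
  proof -
    have a: "m3d (restr d w) d = fd (restr d w)" "m3o (restr d w) d = fo (restr d w)" for w
      unfolding m3d_def m3o_def by simp_all
    have b: "concat_ch 0 M T = T" for M T unfolding concat_ch_def by simp
    show ?thesis unfolding layerT_def pair_apply_def b by (simp add: a)
  qed
  ultimately show ?thesis by blast
qed

lemma ext_mm:
  assumes "psem n d Z"
  shows "\<exists>Z'. psem n (Suc d) Z' \<and> (\<forall>X i j c. c < d \<longrightarrow> Z' X i j c = Z X i j c)
           \<and> (\<forall>X i j. Z' X i j d = (\<Sum>k<n. u (restr d (Z X i k)) (restr d (Z X k i)) * v (restr d (Z X k j))))"
proof -
  define m1 where "m1 w = (\<lambda>c::nat. if c = 0 then u (restr d w) (restr d (\<lambda>c'. w (c' + d))) else 0)" for w :: "nat \<Rightarrow> real"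
  define m2 where "m2 w = (\<lambda>c::nat. if c = 0 then v (restr d w) else 0)" for w :: "nat \<Rightarrow> real"
  define m3 where "m3 w = (\<lambda>c::nat. if c < d then w (c + 1) else if c = d then w 0 else 0)" for w :: "nat \<Rightarrow> real"
  let ?Z' = "\<lambda>X. layerT n 1 d (\<lambda>v. m1 (restr (2*d) v)) (\<lambda>v. m1 (restr (2*d) v))
      (\<lambda>v. m2 (restr d v)) (\<lambda>v. m2 (restr d v)) (\<lambda>v. m3 (restr (1+d) v)) (\<lambda>v. m3 (restr (1+d) v)) (Z X)"
  have "psem n (Suc d) ?Z'" by (rule ps_step[OF assms])
  moreover have "?Z' X i j c = Z X i j c" if "c < d" for X i j c
    using that unfolding layerT_def pair_apply_def concat_ch_def m3_def restr_def by simp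
  moreover have "?Z' X i j d = (\<Sum>k<n. u (restr d (Z X i k)) (restr d (Z X k i)) * v (restr d (Z X k j)))" for X i j
  proof -
    have r1: "restr d (\<lambda>c'. restr (2*d) (concat_ch d (Z X) (transp_ch (Z X)) i k) (c' + d)) = restr d (Z X k i)" for k
      unfolding restr_def concat_ch_def transp_ch_def by (auto simp: fun_eq_iff)
    have r0: "restr d (restr (2*d) (concat_ch d (Z X) (transp_ch (Z X)) i k)) = restr d (Z X i k)" for k
      unfolding restr_def concat_ch_def transp_ch_def by (auto simp: fun_eq_iff)
    have e3: "m3 (restr (1+d) w) d = w 0" for w unfolding m3_def restr_def by simp
    show ?thesis
      unfolding layerT_def pair_apply_def e3 if_cancel
      apply (simp add: chmatmul_def m1_def m2_def r0 r1, simp add: concat_ch_def)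
      apply (rule sum.cong, simp)
      using r0 r1 unfolding concat_ch_def by simp
  qed
  ultimately show ?thesis by blast
qed

lemma op_pw:
  assumes "psem n d Z"
  shows "\<exists>Z' d'. extends n Z d Z' d' \<and> pcomp n Z' d' (\<lambda>X i j. (if i = j then fd else fo) (restr d (Z X i j)))"
proof -
  obtain Z' where Z': "psem n (Suc d) Z'" "\<forall>X i j c. c < d \<longrightarrow> Z' X i j c = Z X i j c"
    "\<forall>X i j. Z' X i j d = (if i = j then fd else fo) (restr d (Z X i j))"
    using ext_pw[OF assms, of fd fo] by blast
  have "extends n Z d Z' (Suc d)" unfolding extends_def pcomp_def using Z' by (metis less_SucI)
  moreover have "pcomp n Z' (Suc d) (\<lambda>X i j. (if i = j then fd else fo) (restr d (Z X i j)))"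
    unfolding pcomp_def using Z'(3) by blast
  ultimately show ?thesis by blast
qed

lemma op_mm0:
  assumes "psem n d Z"
  shows "\<exists>Z' d'. extends n Z d Z' d' \<and> pcomp n Z' d' (\<lambda>X i j. (\<Sum>k<n. u (restr d (Z X i k)) (restr d (Z X k i)) * v (restr d (Z X k j))))"
proof -
  obtain Z' where Z': "psem n (Suc d) Z'" "\<forall>X i j c. c < d \<longrightarrow> Z' X i j c = Z X i j c"
    "\<forall>X i j. Z' X i j d = (\<Sum>k<n. u (restr d (Z X i k)) (restr d (Z X k i)) * v (restr d (Z X k j)))"
    using ext_mm[OF assms, of u v] by blast
  have "extends n Z d Z' (Suc d)" unfolding extends_def pcomp_def using Z' by (metis less_SucI)
  moreover have "pcomp n Z' (Suc d) (\<lambda>X i j. (\<Sum>k<n. u (restr d (Z X i k)) (restr d (Z X k i)) * v (restr d (Z X k j))))"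
    unfolding pcomp_def using Z'(3) by blast
  ultimately show ?thesis by blast
qed

lemma extends_psem: "extends n Z d Z' d' \<Longrightarrow> psem n d' Z'"
  unfolding extends_def by simp

lemma extends_comp: "extends n Z d Z' d' \<Longrightarrow> pcomp n Z d G \<Longrightarrow> pcomp n Z' d' G"
  unfolding extends_def by simp

lemma op_mask:
  assumes "psem n d Z"
  shows "\<exists>Z' d'. extends n Z d Z' d' \<and> pcomp n Z' d' (\<lambda>X i j. if i = j then a else b)"
proof -
  obtain Z' d' where Z': "extends n Z d Z' d'" "pcomp n Z' d' (\<lambda>X i j. (if i = j then (\<lambda>_. a) else (\<lambda>_. b)) (restr d (Z X i j)))"
    using op_pw[OF assms, of "\<lambda>_. a" "\<lambda>_. b"] by blast
  have "pcomp n Z' d' (\<lambda>X i j. if i = j then a else b)" by (rule pcomp_cong[OF Z'(2)]) simp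
  then show ?thesis using Z'(1) by blast
qed

lemma op_fun2:
  assumes "psem n d Z" "pcomp n Z d G1" "pcomp n Z d G2"
  shows "\<exists>Z' d'. extends n Z d Z' d' \<and> pcomp n Z' d' (\<lambda>X i j. F (G1 X i j) (G2 X i j))"
proof -
  obtain c1 where c1: "c1 < d" "\<forall>X\<in>simple_adj n. \<forall>i<n. \<forall>j<n. Z X i j c1 = G1 X i j"
    using assms(2) unfolding pcomp_def by blast
  obtain c2 where c2: "c2 < d" "\<forall>X\<in>simple_adj n. \<forall>i<n. \<forall>j<n. Z X i j c2 = G2 X i j"
    using assms(3) unfolding pcomp_def by blast
  obtain Z' d' where Z': "extends n Z d Z' d'" "pcomp n Z' d' (\<lambda>X i j. (if i = j then (\<lambda>v. F (v c1) (v c2)) else (\<lambda>v. F (v c1) (v c2))) (restr d (Z X i j)))"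
    using op_pw[OF assms(1), of "\<lambda>v. F (v c1) (v c2)" "\<lambda>v. F (v c1) (v c2)"] by blast
  have "pcomp n Z' d' (\<lambda>X i j. F (G1 X i j) (G2 X i j))"
    by (rule pcomp_cong[OF Z'(2)]) (use c1 c2 in \<open>simp add: restr_def\<close>)
  then show ?thesis using Z'(1) by blast
qed

lemma op_mm:
  assumes "psem n d Z" "pcomp n Z d G1" "pcomp n Z d G2"
  shows "\<exists>Z' d'. extends n Z d Z' d' \<and> pcomp n Z' d' (\<lambda>X i j. \<Sum>k<n. G1 X i k * G2 X k j)"
proof -
  obtain c1 where c1: "c1 < d" "\<forall>X\<in>simple_adj n. \<forall>i<n. \<forall>j<n. Z X i j c1 = G1 X i j"
    using assms(2) unfolding pcomp_def by blast
  obtain c2 where c2: "c2 < d" "\<forall>X\<in>simple_adj n. \<forall>i<n. \<forall>j<n. Z X i j c2 = G2 X i j"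
    using assms(3) unfolding pcomp_def by blast
  obtain Z' d' where Z': "extends n Z d Z' d'" "pcomp n Z' d' (\<lambda>X i j. (\<Sum>k<n. restr d (Z X i k) c1 * restr d (Z X k j) c2))"
    using op_mm0[OF assms(1), of "\<lambda>v w. v c1" "\<lambda>v. v c2"] by blast
  have "pcomp n Z' d' (\<lambda>X i j. \<Sum>k<n. G1 X i k * G2 X k j)"
    by (rule pcomp_cong[OF Z'(2)]) (use c1 c2 in \<open>simp add: restr_def\<close>)
  then show ?thesis using Z'(1) by blast
qed

lemma op_tmm:
  assumes "psem n d Z" "pcomp n Z d G1" "pcomp n Z d G2"
  shows "\<exists>Z' d'. extends n Z d Z' d' \<and> pcomp n Z' d' (\<lambda>X i j. \<Sum>k<n. G1 X k i * G2 X k j)"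
proof -
  obtain c1 where c1: "c1 < d" "\<forall>X\<in>simple_adj n. \<forall>i<n. \<forall>j<n. Z X i j c1 = G1 X i j"
    using assms(2) unfolding pcomp_def by blast
  obtain c2 where c2: "c2 < d" "\<forall>X\<in>simple_adj n. \<forall>i<n. \<forall>j<n. Z X i j c2 = G2 X i j"
    using assms(3) unfolding pcomp_def by blast
  obtain Z' d' where Z': "extends n Z d Z' d'" "pcomp n Z' d' (\<lambda>X i j. (\<Sum>k<n. restr d (Z X k i) c1 * restr d (Z X k j) c2))"
    using op_mm0[OF assms(1), of "\<lambda>v w. w c1" "\<lambda>v. v c2"] by blast
  have "pcomp n Z' d' (\<lambda>X i j. \<Sum>k<n. G1 X k i * G2 X k j)"
    by (rule pcomp_cong[OF Z'(2)]) (use c1 c2 in \<open>simp add: restr_def\<close>)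
  then show ?thesis using Z'(1) by blast
qed

lemma op_transp:
  assumes "psem n d Z" "pcomp n Z d G"
  shows "\<exists>Z' d'. extends n Z d Z' d' \<and> pcomp n Z' d' (\<lambda>X i j. G X j i)"
proof -
  obtain Z1 d1 where Z1: "extends n Z d Z1 d1" "pcomp n Z1 d1 (\<lambda>X i j. if i = j then 1 else 0)"
    using op_mask[OF assms(1)] by blast
  obtain Z2 d2 where Z2: "extends n Z1 d1 Z2 d2" "pcomp n Z2 d2 (\<lambda>X i j. \<Sum>k<n. G X k i * (if k = j then 1 else 0))"
    using op_tmm[OF extends_psem[OF Z1(1)] extends_comp[OF Z1(1) assms(2)] Z1(2)] by blast
  have "pcomp n Z2 d2 (\<lambda>X i j. G X j i)"
    by (rule pcomp_cong[OF Z2(2)]) (simp add: if_distrib cong: if_cong)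
  then show ?thesis using extends_trans[OF Z1(1) Z2(1)] by blast
qed

lemma sum_delta_l: "i < (n::nat) \<Longrightarrow> (\<Sum>k<n. f k * (if i = k then 1 else 0) * (if k = j then 1 else 1)) = (f i::real)"
  by (subst sum.remove[of _ i]) (auto intro!: sum.neutral)

lemma sum_delta_r: "j < (n::nat) \<Longrightarrow> (\<Sum>k<n. (if i = k then 1 else 1) * (f k * (if k = j then 1 else 0))) = (f j::real)"
  by (subst sum.remove[of _ j]) (auto intro!: sum.neutral)

lemma op_rowdiag:
  assumes "psem n d Z" "pcomp n Z d G"
  shows "\<exists>Z' d'. extends n Z d Z' d' \<and> pcomp n Z' d' (\<lambda>X i j. G X i i)"
proof -
  obtain Z1 d1 where Z1: "extends n Z d Z1 d1" "pcomp n Z1 d1 (\<lambda>X i j. if i = j then 1 else 0)"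
    using op_mask[OF assms(1)] by blast
  obtain Z2 d2 where Z2: "extends n Z1 d1 Z2 d2" "pcomp n Z2 d2 (\<lambda>X i j. G X i j * (if i = j then 1 else 0))"
    using op_fun2[OF extends_psem[OF Z1(1)] extends_comp[OF Z1(1) assms(2)] Z1(2)] by blast
  obtain Z3 d3 where Z3: "extends n Z2 d2 Z3 d3" "pcomp n Z3 d3 (\<lambda>X i j. if i = j then 1 else 1)"
    using op_mask[OF extends_psem[OF Z2(1)]] by blast
  obtain Z4 d4 where Z4: "extends n Z3 d3 Z4 d4" "pcomp n Z4 d4 (\<lambda>X i j. \<Sum>k<n. G X i k * (if i = k then 1 else 0) * (if k = j then 1 else 1))"
    using op_mm[OF extends_psem[OF Z3(1)] extends_comp[OF Z3(1) Z2(2)] Z3(2)] by blast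
  have "pcomp n Z4 d4 (\<lambda>X i j. G X i i)"
    by (rule pcomp_cong[OF Z4(2)]) (simp add: sum_delta_l del: if_cancel)
  then show ?thesis using extends_trans[OF Z1(1) extends_trans[OF Z2(1) extends_trans[OF Z3(1) Z4(1)]]] by blast
qed

lemma op_coldiag:
  assumes "psem n d Z" "pcomp n Z d G"
  shows "\<exists>Z' d'. extends n Z d Z' d' \<and> pcomp n Z' d' (\<lambda>X i j. G X j j)"
proof -
  obtain Z1 d1 where Z1: "extends n Z d Z1 d1" "pcomp n Z1 d1 (\<lambda>X i j. if i = j then 1 else 0)"
    using op_mask[OF assms(1)] by blast
  obtain Z2 d2 where Z2: "extends n Z1 d1 Z2 d2" "pcomp n Z2 d2 (\<lambda>X i j. G X i j * (if i = j then 1 else 0))"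
    using op_fun2[OF extends_psem[OF Z1(1)] extends_comp[OF Z1(1) assms(2)] Z1(2)] by blast
  obtain Z3 d3 where Z3: "extends n Z2 d2 Z3 d3" "pcomp n Z3 d3 (\<lambda>X i j. if i = j then 1 else 1)"
    using op_mask[OF extends_psem[OF Z2(1)]] by blast
  obtain Z4 d4 where Z4: "extends n Z3 d3 Z4 d4" "pcomp n Z4 d4 (\<lambda>X i j. \<Sum>k<n. (if i = k then 1 else 1) * (G X k j * (if k = j then 1 else 0)))"
    using op_mm[OF extends_psem[OF Z3(1)] Z3(2) extends_comp[OF Z3(1) Z2(2)]] by blast
  have "pcomp n Z4 d4 (\<lambda>X i j. G X j j)"
    by (rule pcomp_cong[OF Z4(2)]) (simp add: sum_delta_r del: if_cancel)
  then show ?thesis using extends_trans[OF Z1(1) extends_trans[OF Z2(1) extends_trans[OF Z3(1) Z4(1)]]] by blast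
qed

lemma op_prod:
  assumes "psem n d Z" "\<forall>e\<in>#M. pcomp n Z d (F e)"
  shows "\<exists>Z' d'. extends n Z d Z' d' \<and> pcomp n Z' d' (\<lambda>X i j. \<Prod>e\<in>#M. F e X i j)"
  using assms(2)
proof (induction M)
  case empty
  obtain Z' d' where "extends n Z d Z' d'" "pcomp n Z' d' (\<lambda>X i j. if i = j then 1 else 1)"
    using op_mask[OF assms(1)] by blast
  then show ?case by (simp; blast)
next
  case (add x M)
  obtain Z1 d1 where Z1: "extends n Z d Z1 d1" "pcomp n Z1 d1 (\<lambda>X i j. \<Prod>e\<in>#M. F e X i j)"
    using add by auto
  obtain Z2 d2 where Z2: "extends n Z1 d1 Z2 d2" "pcomp n Z2 d2 (\<lambda>X i j. F x X i j * (\<Prod>e\<in>#M. F e X i j))"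
  proof -
    have cx: "pcomp n Z1 d1 (F x)" using extends_comp[OF Z1(1)] add.prems by simp
    show ?thesis using op_fun2[OF extends_psem[OF Z1(1)] cx Z1(2), where F="\<lambda>a b. a * b"] that by blast
  qed
  then show ?case using extends_trans[OF Z1(1) Z2(1)] by auto
qed

lemma sum_PiE_insert:
  assumes "v \<notin> W" "finite S" "finite W"
  shows "(\<Sum>\<phi>\<in>PiE (insert v W) (\<lambda>_. S). F \<phi>) = (\<Sum>\<psi>\<in>PiE W (\<lambda>_. S). \<Sum>k\<in>S. F (\<psi>(v := k)))"
proof -
  have "(\<Sum>\<phi>\<in>PiE (insert v W) (\<lambda>_. S). F \<phi>) = (\<Sum>z\<in>S \<times> PiE W (\<lambda>_. S). F ((\<lambda>(y, g). g(v := y)) z))"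
    unfolding PiE_insert_eq by (subst sum.reindex[OF inj_combinator[OF assms(1)]]) (simp add: o_def)
  also have "\<dots> = (\<Sum>k\<in>S. \<Sum>\<psi>\<in>PiE W (\<lambda>_. S). F (\<psi>(v := k)))"
    unfolding sum.cartesian_product by (simp add: split_def)
  also have "\<dots> = (\<Sum>\<psi>\<in>PiE W (\<lambda>_. S). \<Sum>k\<in>S. F (\<psi>(v := k)))"
    by (rule sum.swap)
  finally show ?thesis .
qed

definition pv :: "nat set set \<Rightarrow> nat \<Rightarrow> nat set set" where
  "pv P v = {p\<in>P. v \<in> p}"

lemma two_set_eq: "p = {x, y} \<Longrightarrow> v \<in> p \<Longrightarrow> w \<in> p \<Longrightarrow> v \<noteq> w \<Longrightarrow> p = {v, w}"
  by auto

lemma pv_inter: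
  assumes "\<forall>p\<in>P. \<exists>x y. p = {x, y} \<and> x \<noteq> y" "v \<noteq> w"
  shows "pv P v \<inter> pv P w \<subseteq> {{v, w}}"
  using assms unfolding pv_def by (auto dest: two_set_eq)

lemma card_union_pv:
  assumes P: "\<forall>p\<in>P. \<exists>x y. p = {x, y} \<and> x \<noteq> y" "finite P" and vw: "v \<noteq> w"
  shows "card (pv P v \<union> pv P w) + 1 \<ge> card (pv P v) + card (pv P w)"
proof -
  have f: "finite (pv P v)" "finite (pv P w)" using P(2) unfolding pv_def by auto
  have "card (pv P v \<inter> pv P w) \<le> card {{v, w}}" by (rule card_mono) (use pv_inter[OF P(1) vw] in auto)
  then have "card (pv P v \<inter> pv P w) \<le> 1" by simp
  moreover have "card (pv P v) + card (pv P w) = card (pv P v \<union> pv P w) + card (pv P v \<inter> pv P w)"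
    by (rule card_Un_Int[OF f])
  ultimately show ?thesis by linarith
qed

lemma elim_exists:
  assumes finW: "finite W" and ab: "a \<in> W" "b \<in> W"
    and P: "\<forall>p\<in>P. \<exists>x y. p = {x, y} \<and> x \<noteq> y \<and> x \<in> W \<and> y \<in> W"
    and cP: "card P \<le> (if a = b then 5 else 4)"
    and U: "W - {a, b} \<noteq> {}"
  shows "\<exists>v\<in>W - {a, b}. card (pv P v) \<le> 2"
proof (rule ccontr)
  assume "\<not> ?thesis"
  then have all3: "\<forall>v\<in>W - {a, b}. card (pv P v) \<ge> 3"
  proof (intro ballI)
    fix v assume "\<not> (\<exists>v\<in>W - {a, b}. card (pv P v) \<le> 2)" "v \<in> W - {a, b}"
    then have "\<not> card (pv P v) \<le> 2" by blast
    then show "card (pv P v) \<ge> 3" by simp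
  qed
  have P2: "\<forall>p\<in>P. \<exists>x y. p = {x, y} \<and> x \<noteq> y"
  proof
    fix p assume "p \<in> P"
    then obtain x y where "p = {x, y} \<and> x \<noteq> y" using P by meson
    then show "\<exists>x y. p = {x, y} \<and> x \<noteq> y" by (intro exI)
  qed
  have PW: "P \<subseteq> Pow W"
  proof
    fix p assume "p \<in> P"
    then obtain x y where "p = {x, y}" "x \<in> W" "y \<in> W" using P by meson
    then show "p \<in> Pow W" by simp
  qed
  have finP: "finite P" by (rule finite_subset[OF PW]) (use finW in simp)
  obtain v where v: "v \<in> W - {a, b}" using U by blast
  have pvv: "pv P v \<subseteq> (\<lambda>x. {v, x}) ` (W - {v})"
  proof
    fix p assume "p \<in> pv P v"
    then have pP: "p \<in> P" "v \<in> p" unfolding pv_def by auto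
    then obtain x y where xy: "p = {x, y}" "x \<noteq> y" "x \<in> W" "y \<in> W" using P by blast
    show "p \<in> (\<lambda>x. {v, x}) ` (W - {v})"
    proof (cases "v = x")
      case True then show ?thesis using xy by (intro image_eqI[of _ _ y]) auto
    next
      case False then have "v = y" using xy pP by auto
      then show ?thesis using xy by (intro image_eqI[of _ _ x]) auto
    qed
  qed
  have finpv: "finite (pv P u)" for u using finP unfolding pv_def by simp
  have "card (pv P v) \<ge> 3" using all3 v by blast
  show False
  proof (cases "a = b")
    case False
    have "\<exists>w\<in>W - {a, b}. w \<noteq> v \<and> {v, w} \<in> P"
    proof (rule ccontr)
      assume "\<not> ?thesis"
      then have "pv P v \<subseteq> {{v, a}, {v, b}}" using pvv unfolding pv_def by auto
      then have "card (pv P v) \<le> card {{v, a}, {v, b}}" by (rule card_mono[rotated]) simp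
      also have "\<dots> \<le> 2" by (simp add: card_insert_if)
      finally show False using \<open>card (pv P v) \<ge> 3\<close> by simp
    qed
    then obtain w where w: "w \<in> W - {a, b}" "w \<noteq> v" by blast
    have "card (pv P w) \<ge> 3" using all3 w by blast
    then have "card (pv P v) + card (pv P w) \<ge> 6" using \<open>card (pv P v) \<ge> 3\<close> by linarith
    then have "card (pv P v \<union> pv P w) \<ge> 5" using card_union_pv[OF P2 finP, of v w] w by linarith
    moreover have "card (pv P v \<union> pv P w) \<le> card P" by (rule card_mono[OF finP]) (auto simp: pv_def)
    ultimately show False using cP False by simp
  next
    case True
    have sub: "pv P v - {{v, a}} \<subseteq> (\<lambda>x. {v, x}) ` (W - {a, v})"
      using pvv by auto
    have "card (pv P v - {{v, a}}) \<ge> 2"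
      using \<open>card (pv P v) \<ge> 3\<close> card_Diff_singleton_if[of "pv P v" "{v,a}"] finpv[of v] by (auto split: if_splits)
    then have "pv P v - {{v, a}} \<noteq> {}" by (intro notI) simp
    then obtain p1 where p1: "p1 \<in> pv P v - {{v, a}}" by blast
    have "card (pv P v - {{v, a}} - {p1}) \<ge> 1"
      using \<open>card (pv P v - {{v, a}}) \<ge> 2\<close> p1 finpv[of v] by (simp add: card_Diff_singleton)
    then have "pv P v - {{v, a}} - {p1} \<noteq> {}" by (intro notI) simp
    then obtain p2 where p2: "p2 \<in> pv P v - {{v, a}} - {p1}" by blast
    have p12: "p1 \<in> pv P v - {{v, a}}" "p2 \<in> pv P v - {{v, a}}" "p1 \<noteq> p2" using p1 p2 by auto
    obtain w1 where w1: "w1 \<in> W - {a, v}" "p1 = {v, w1}" using sub p12 by blast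
    obtain w2 where w2: "w2 \<in> W - {a, v}" "p2 = {v, w2}" using sub p12 by blast
    have w12: "w1 \<noteq> w2" using p12 w1 w2 by auto
    have c1: "card (pv P w1) \<ge> 3" "card (pv P w2) \<ge> 3" using all3 w1 w2 True by auto
    have "v \<noteq> w1" using w1 by auto
    then have "card (pv P v \<union> pv P w1) \<ge> 5" using card_union_pv[OF P2 finP, of v w1] c1 \<open>card (pv P v) \<ge> 3\<close> by linarith
    moreover have "(pv P v \<union> pv P w1) \<inter> pv P w2 \<subseteq> {{v, w2}, {w1, w2}}"
    proof -
      have i1: "pv P v \<inter> pv P w2 \<subseteq> {{v, w2}}" by (rule pv_inter[OF P2]) (use w2 in auto)
      have i2: "pv P w1 \<inter> pv P w2 \<subseteq> {{w1, w2}}" by (rule pv_inter[OF P2 w12])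
      show ?thesis using i1 i2 by (simp add: Int_Un_distrib2) blast
    qed
    then have "card ((pv P v \<union> pv P w1) \<inter> pv P w2) \<le> 2"
      by (rule card_mono[rotated, THEN order.trans]) (auto simp: card_insert_if)
    moreover have "card (pv P v \<union> pv P w1) + card (pv P w2) = card ((pv P v \<union> pv P w1) \<union> pv P w2) + card ((pv P v \<union> pv P w1) \<inter> pv P w2)"
      by (rule card_Un_Int) (auto simp: finpv)
    moreover have "card ((pv P v \<union> pv P w1) \<union> pv P w2) \<le> card P" by (rule card_mono[OF finP]) (auto simp: pv_def)
    ultimately show False using cP True c1 by simp
  qed
qed

lemma op_sel:
  assumes "psem n d Z" "pcomp n Z d G"
  shows "\<exists>Z' d'. extends n Z d Z' d' \<and> pcomp n Z' d' (\<lambda>X x y. G X (if p then x else y) (if q then x else y))"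
proof (cases p; cases q)
  assume "p" "q"
  then show ?thesis using op_rowdiag[OF assms] by simp
next
  assume "p" "\<not> q"
  then show ?thesis using extends_refl[OF assms(1)] assms(2) by auto
next
  assume "\<not> p" "q"
  then show ?thesis using op_transp[OF assms] by simp
next
  assume "\<not> p" "\<not> q"
  then show ?thesis using op_coldiag[OF assms] by simp
qed

lemma op_map:
  assumes "psem n d Z" "\<forall>e\<in>#M. pcomp n Z d (F e)"
    and step: "\<And>Z d e. psem n d Z \<Longrightarrow> pcomp n Z d (F e) \<Longrightarrow> \<exists>Z' d'. extends n Z d Z' d' \<and> pcomp n Z' d' (H e)"
  shows "\<exists>Z' d'. extends n Z d Z' d' \<and> (\<forall>e\<in>#M. pcomp n Z' d' (H e))"
  using assms(2)
proof (induction M)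
  case empty then show ?case using extends_refl[OF assms(1)] by auto
next
  case (add x M)
  obtain Z1 d1 where Z1: "extends n Z d Z1 d1" "\<forall>e\<in>#M. pcomp n Z1 d1 (H e)" using add by auto
  have "pcomp n Z1 d1 (F x)" using extends_comp[OF Z1(1)] add.prems by simp
  then obtain Z2 d2 where Z2: "extends n Z1 d1 Z2 d2" "pcomp n Z2 d2 (H x)"
    using step[OF extends_psem[OF Z1(1)]] by blast
  have "\<forall>e\<in>#add_mset x M. pcomp n Z2 d2 (H e)" using Z2 Z1(2) extends_comp[OF Z2(1)] by auto
  then show ?case using extends_trans[OF Z1(1) Z2(1)] by blast
qed

type_synonym MLab = "(nat \<Rightarrow> nat \<Rightarrow> real) \<Rightarrow> nat \<Rightarrow> nat \<Rightarrow> real"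

definition lval :: "nat \<Rightarrow> nat set \<Rightarrow> (nat \<times> nat \<times> MLab) multiset \<Rightarrow> nat \<Rightarrow> nat \<Rightarrow> MLab" where
  "lval n W E a b X i j = (\<Sum>\<phi>\<in>{\<phi>\<in>PiE W (\<lambda>_. {..<n}). \<phi> a = i \<and> \<phi> b = j}.
       \<Prod>e\<in>#E. snd (snd e) X (\<phi> (fst e)) (\<phi> (fst (snd e))))"

definition spairs :: "(nat \<times> nat \<times> MLab) multiset \<Rightarrow> nat set set" where
  "spairs E = (\<lambda>e. {fst e, fst (snd e)}) ` {e\<in>set_mset E. fst e \<noteq> fst (snd e)}"

lemma lval_base:
  assumes W: "W = {a, b}" and ij: "i < n" "j < n"
    and ends: "\<forall>e\<in>#E. fst e \<in> W \<and> fst (snd e) \<in> W"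
  shows "lval n W E a b X i j = (if a = b \<and> i \<noteq> j then 0 else
     \<Prod>e\<in>#E. snd (snd e) X (if fst e = a then i else j) (if fst (snd e) = a then i else j))"
proof (cases "a = b \<and> i \<noteq> j")
  case True
  then have e: "{\<phi>\<in>PiE W (\<lambda>_. {..<n}). \<phi> a = i \<and> \<phi> b = j} = {}" by auto
  show ?thesis unfolding lval_def e using True by simp
next
  case False
  define \<phi>0 where "\<phi>0 z = (if z = a then i else if z = b then j else undefined)" for z
  have "{\<phi>\<in>PiE W (\<lambda>_. {..<n}). \<phi> a = i \<and> \<phi> b = j} = {\<phi>0}"
  proof (intro equalityI subsetI)
    fix \<phi> assume "\<phi> \<in> {\<phi>\<in>PiE W (\<lambda>_. {..<n}). \<phi> a = i \<and> \<phi> b = j}"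
    then show "\<phi> \<in> {\<phi>0}" unfolding \<phi>0_def W by (auto simp: PiE_def extensional_def fun_eq_iff)
  next
    fix \<phi> assume "\<phi> \<in> {\<phi>0}"
    then show "\<phi> \<in> {\<phi>\<in>PiE W (\<lambda>_. {..<n}). \<phi> a = i \<and> \<phi> b = j}"
      unfolding \<phi>0_def W using ij False by (auto simp: PiE_def extensional_def)
  qed
  moreover have "(\<Prod>e\<in>#E. snd (snd e) X (\<phi>0 (fst e)) (\<phi>0 (fst (snd e)))) =
     (\<Prod>e\<in>#E. snd (snd e) X (if fst e = a then i else j) (if fst (snd e) = a then i else j))"
  proof (rule arg_cong[where f = prod_mset], rule image_mset_cong)
    fix e assume "e \<in># E"
    then have "fst e \<in> {a, b}" "fst (snd e) \<in> {a, b}" using ends W by auto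
    then show "snd (snd e) X (\<phi>0 (fst e)) (\<phi>0 (fst (snd e))) =
       snd (snd e) X (if fst e = a then i else j) (if fst (snd e) = a then i else j)"
      unfolding \<phi>0_def using False by auto
  qed
  ultimately have "lval n W E a b X i j = (\<Prod>e\<in>#E. snd (snd e) X (if fst e = a then i else j) (if fst (snd e) = a then i else j))"
    unfolding lval_def by simp
  then show ?thesis by (simp only: if_not_P[OF False])
qed

lemma base_comp:
  assumes W: "W = {a, b}" and ends: "\<forall>e\<in>#E. fst e \<in> W \<and> fst (snd e) \<in> W"
    and Z: "psem n d Z" and labs: "\<forall>e\<in>#E. pcomp n Z d (snd (snd e))"
  shows "\<exists>Z' d'. extends n Z d Z' d' \<and> pcomp n Z' d' (lval n W E a b)"
proof -
  obtain Z1 d1 where Z1: "extends n Z d Z1 d1"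
    "\<forall>e\<in>#E. pcomp n Z1 d1 (\<lambda>X x y. snd (snd e) X (if fst e = a then x else y) (if fst (snd e) = a then x else y))"
    using op_map[OF Z labs, where H = "\<lambda>e X x y. snd (snd e) X (if fst e = a then x else y) (if fst (snd e) = a then x else y)"]
      op_sel by blast
  obtain Z2 d2 where Z2: "extends n Z1 d1 Z2 d2"
    "pcomp n Z2 d2 (\<lambda>X x y. \<Prod>e\<in>#E. snd (snd e) X (if fst e = a then x else y) (if fst (snd e) = a then x else y))"
    using op_prod[OF extends_psem[OF Z1(1)] Z1(2)] by blast
  obtain Z3 d3 where Z3: "extends n Z2 d2 Z3 d3" "pcomp n Z3 d3 (\<lambda>X i j. if i = j then 1 else (if a = b then 0 else 1))"
    using op_mask[OF extends_psem[OF Z2(1)]] by blast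
  obtain Z4 d4 where Z4: "extends n Z3 d3 Z4 d4"
    "pcomp n Z4 d4 (\<lambda>X x y. (if x = y then 1 else (if a = b then 0 else 1)) * (\<Prod>e\<in>#E. snd (snd e) X (if fst e = a then x else y) (if fst (snd e) = a then x else y)))"
    using op_fun2[OF extends_psem[OF Z3(1)] Z3(2) extends_comp[OF Z3(1) Z2(2)], where F = "\<lambda>u v. u * v"] by blast
  have "pcomp n Z4 d4 (lval n W E a b)"
    by (rule pcomp_cong[OF Z4(2)]) (use lval_base[OF W _ _ ends] in auto)
  then show ?thesis using extends_trans[OF Z1(1) extends_trans[OF Z2(1) extends_trans[OF Z3(1) Z4(1)]]] by blast
qed

definition incid :: "nat \<Rightarrow> nat \<times> nat \<times> MLab \<Rightarrow> bool" where
  "incid v e \<longleftrightarrow> fst e = v \<or> fst (snd e) = v"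

definition EA :: "nat \<Rightarrow> nat \<Rightarrow> nat \<Rightarrow> (nat \<times> nat \<times> MLab) multiset \<Rightarrow> (nat \<times> nat \<times> MLab) multiset" where
  "EA v u w E = filter_mset (\<lambda>e. incid v e \<and> \<not> (u \<noteq> w \<and> incid w e)) E"
definition EB :: "nat \<Rightarrow> nat \<Rightarrow> nat \<Rightarrow> (nat \<times> nat \<times> MLab) multiset \<Rightarrow> (nat \<times> nat \<times> MLab) multiset" where
  "EB v u w E = filter_mset (\<lambda>e. incid v e \<and> (u \<noteq> w \<and> incid w e)) E"
definition ER :: "nat \<Rightarrow> (nat \<times> nat \<times> MLab) multiset \<Rightarrow> (nat \<times> nat \<times> MLab) multiset" where
  "ER v E = filter_mset (\<lambda>e. \<not> incid v e) E"

definition Amat :: "nat \<Rightarrow> (nat \<times> nat \<times> MLab) multiset \<Rightarrow> MLab" where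
  "Amat v M X x k = (\<Prod>e\<in>#M. snd (snd e) X (if fst e = v then k else x) (if fst (snd e) = v then k else x))"
definition Bmat :: "nat \<Rightarrow> (nat \<times> nat \<times> MLab) multiset \<Rightarrow> MLab" where
  "Bmat v M X k y = (\<Prod>e\<in>#M. snd (snd e) X (if fst e = v then k else y) (if fst (snd e) = v then k else y))"
definition Mnew :: "nat \<Rightarrow> nat \<Rightarrow> nat \<Rightarrow> nat \<Rightarrow> (nat \<times> nat \<times> MLab) multiset \<Rightarrow> MLab" where
  "Mnew n v u w E X x y = (\<Sum>k<n. Amat v (EA v u w E) X x k * Bmat v (EB v u w E) X k y)"

lemma E_split: "E = EA v u w E + EB v u w E + ER v E"
  by (rule multiset_eqI) (auto simp: EA_def EB_def ER_def)

lemma elim_value: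
  assumes finW: "finite W" and v: "v \<in> W" and ab: "a \<in> W - {v}" "b \<in> W - {v}"
    and uw: "u \<in> W - {v}" "w \<in> W - {v}"
    and nb: "\<forall>e\<in>#E. incid v e \<longrightarrow> fst e \<in> {v, u, w} \<and> fst (snd e) \<in> {v, u, w}"
  shows "lval n W E a b X i j = lval n (W - {v}) (ER v E + {#(u, w, Mnew n v u w E)#}) a b X i j"
proof -
  define W' where "W' = W - {v}"
  have W: "W = insert v W'" "v \<notin> W'" "finite W'" using v finW unfolding W'_def by auto
  define P where "P \<phi> = (\<Prod>e\<in>#E. snd (snd e) X (\<phi> (fst e)) (\<phi> (fst (snd e))))" for \<phi> :: "nat \<Rightarrow> nat"
  define E' where "E' = ER v E + {#(u, w, Mnew n v u w E)#}"
  define P' where "P' \<phi> = (\<Prod>e\<in>#E'. snd (snd e) X (\<phi> (fst e)) (\<phi> (fst (snd e))))" for \<phi> :: "nat \<Rightarrow> nat"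
  have key: "(\<Sum>k<n. P (\<psi>(v := k))) = P' \<psi>" for \<psi>
  proof -
    have pA: "(\<Prod>e\<in>#EA v u w E. snd (snd e) X ((\<psi>(v := k)) (fst e)) ((\<psi>(v := k)) (fst (snd e))))
        = Amat v (EA v u w E) X (\<psi> u) k" for k
      unfolding Amat_def
    proof (rule arg_cong[where f = prod_mset], rule image_mset_cong)
      fix e assume e: "e \<in># EA v u w E"
      then have e1: "e \<in># E" "incid v e" "\<not> (u \<noteq> w \<and> incid w e)" unfolding EA_def by auto
      then have "fst e \<in> {v, u, w}" "fst (snd e) \<in> {v, u, w}" using nb by auto
      then have "(\<psi>(v := k)) (fst e) = (if fst e = v then k else \<psi> u)"
                "(\<psi>(v := k)) (fst (snd e)) = (if fst (snd e) = v then k else \<psi> u)"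
        using e1(3) uw unfolding incid_def by auto
      then show "snd (snd e) X ((\<psi>(v := k)) (fst e)) ((\<psi>(v := k)) (fst (snd e))) =
          snd (snd e) X (if fst e = v then k else \<psi> u) (if fst (snd e) = v then k else \<psi> u)" by simp
    qed
    have pB: "(\<Prod>e\<in>#EB v u w E. snd (snd e) X ((\<psi>(v := k)) (fst e)) ((\<psi>(v := k)) (fst (snd e))))
        = Bmat v (EB v u w E) X k (\<psi> w)" for k
      unfolding Bmat_def
    proof (rule arg_cong[where f = prod_mset], rule image_mset_cong)
      fix e assume e: "e \<in># EB v u w E"
      then have e1: "e \<in># E" "incid v e" "u \<noteq> w" "incid w e" unfolding EB_def by auto
      have "v \<noteq> w" using uw by auto
      then have "(\<psi>(v := k)) (fst e) = (if fst e = v then k else \<psi> w)"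
                "(\<psi>(v := k)) (fst (snd e)) = (if fst (snd e) = v then k else \<psi> w)"
        using e1 unfolding incid_def by auto
      then show "snd (snd e) X ((\<psi>(v := k)) (fst e)) ((\<psi>(v := k)) (fst (snd e))) =
          snd (snd e) X (if fst e = v then k else \<psi> w) (if fst (snd e) = v then k else \<psi> w)" by simp
    qed
    have pR: "(\<Prod>e\<in>#ER v E. snd (snd e) X ((\<psi>(v := k)) (fst e)) ((\<psi>(v := k)) (fst (snd e))))
        = (\<Prod>e\<in>#ER v E. snd (snd e) X (\<psi> (fst e)) (\<psi> (fst (snd e))))" for k
    proof (rule arg_cong[where f = prod_mset], rule image_mset_cong)
      fix e assume "e \<in># ER v E"
      then have "\<not> incid v e" unfolding ER_def by auto
      then show "snd (snd e) X ((\<psi>(v := k)) (fst e)) ((\<psi>(v := k)) (fst (snd e))) =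
          snd (snd e) X (\<psi> (fst e)) (\<psi> (fst (snd e)))" unfolding incid_def by auto
    qed
    have "P (\<psi>(v := k)) = Amat v (EA v u w E) X (\<psi> u) k * Bmat v (EB v u w E) X k (\<psi> w) *
        (\<Prod>e\<in>#ER v E. snd (snd e) X (\<psi> (fst e)) (\<psi> (fst (snd e))))" for k
      unfolding P_def by (subst E_split[of E v u w]) (simp only: image_mset_union prod_mset.union pA pB pR)
    then have "(\<Sum>k<n. P (\<psi>(v := k))) = Mnew n v u w E X (\<psi> u) (\<psi> w) *
        (\<Prod>e\<in>#ER v E. snd (snd e) X (\<psi> (fst e)) (\<psi> (fst (snd e))))"
      unfolding Mnew_def by (simp add: sum_distrib_right)
    also have "\<dots> = P' \<psi>" unfolding P'_def E'_def by (simp add: mult.commute)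
    finally show ?thesis .
  qed
  have finP: "finite (PiE W (\<lambda>_. {..<n}))" "finite (PiE W' (\<lambda>_. {..<n}))"
    using W finW by (auto intro: finite_PiE)
  have "lval n W E a b X i j = (\<Sum>\<phi>\<in>PiE W (\<lambda>_. {..<n}). if \<phi> a = i \<and> \<phi> b = j then P \<phi> else 0)"
    unfolding lval_def P_def by (rule sum.inter_filter[OF finP(1)])
  also have "\<dots> = (\<Sum>\<psi>\<in>PiE W' (\<lambda>_. {..<n}). \<Sum>k\<in>{..<n}. if (\<psi>(v := k)) a = i \<and> (\<psi>(v := k)) b = j then P (\<psi>(v := k)) else 0)"
    unfolding W(1) by (rule sum_PiE_insert) (use W in auto)
  also have "\<dots> = (\<Sum>\<psi>\<in>PiE W' (\<lambda>_. {..<n}). if \<psi> a = i \<and> \<psi> b = j then P' \<psi> else 0)"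
  proof (rule sum.cong[OF refl])
    fix \<psi>
    have "a \<noteq> v" "b \<noteq> v" using ab by auto
    then show "(\<Sum>k\<in>{..<n}. if (\<psi>(v := k)) a = i \<and> (\<psi>(v := k)) b = j then P (\<psi>(v := k)) else 0)
        = (if \<psi> a = i \<and> \<psi> b = j then P' \<psi> else 0)" using key[of \<psi>] by auto
  qed
  also have "\<dots> = lval n W' E' a b X i j"
    unfolding lval_def P'_def by (rule sum.inter_filter[OF finP(2), symmetric])
  finally show ?thesis unfolding W'_def E'_def .
qed

lemma op_sel':
  assumes "psem n d Z" "pcomp n Z d G"
  shows "\<exists>Z' d'. extends n Z d Z' d' \<and> pcomp n Z' d' (\<lambda>X x k. G X (if p then k else x) (if q then k else x))"
proof -
  obtain Z' d' where Z': "extends n Z d Z' d'" "pcomp n Z' d' (\<lambda>X x y. G X (if \<not> p then x else y) (if \<not> q then x else y))"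
    using op_sel[OF assms] by blast
  have "pcomp n Z' d' (\<lambda>X x k. G X (if p then k else x) (if q then k else x))"
    by (rule pcomp_cong[OF Z'(2)]) (cases p; cases q; simp)
  then show ?thesis using Z'(1) by blast
qed

lemma Mnew_comp:
  assumes Z: "psem n d Z" and labs: "\<forall>e\<in>#E. pcomp n Z d (snd (snd e))"
  shows "\<exists>Z' d'. extends n Z d Z' d' \<and> pcomp n Z' d' (Mnew n v u w E)"
proof -
  have la: "\<forall>e\<in>#EA v u w E. pcomp n Z d (snd (snd e))" using labs unfolding EA_def by auto
  have lb: "\<forall>e\<in>#EB v u w E. pcomp n Z d (snd (snd e))" using labs unfolding EB_def by auto
  obtain Z1 d1 where Z1: "extends n Z d Z1 d1"
    "\<forall>e\<in>#EA v u w E. pcomp n Z1 d1 (\<lambda>X x k. snd (snd e) X (if fst e = v then k else x) (if fst (snd e) = v then k else x))"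
    using op_map[OF Z la, where H = "\<lambda>e X x k. snd (snd e) X (if fst e = v then k else x) (if fst (snd e) = v then k else x)"]
      op_sel' by blast
  obtain Z2 d2 where Z2: "extends n Z1 d1 Z2 d2" "pcomp n Z2 d2 (Amat v (EA v u w E))"
    using op_prod[OF extends_psem[OF Z1(1)] Z1(2)] unfolding Amat_def by blast
  have lb2: "\<forall>e\<in>#EB v u w E. pcomp n Z2 d2 (snd (snd e))"
    using lb extends_comp[OF extends_trans[OF Z1(1) Z2(1)]] by blast
  obtain Z3 d3 where Z3: "extends n Z2 d2 Z3 d3"
    "\<forall>e\<in>#EB v u w E. pcomp n Z3 d3 (\<lambda>X x y. snd (snd e) X (if fst e = v then x else y) (if fst (snd e) = v then x else y))"
    using op_map[OF extends_psem[OF Z2(1)] lb2, where H = "\<lambda>e X x y. snd (snd e) X (if fst e = v then x else y) (if fst (snd e) = v then x else y)"]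
      op_sel by blast
  obtain Z4 d4 where Z4: "extends n Z3 d3 Z4 d4" "pcomp n Z4 d4 (Bmat v (EB v u w E))"
    using op_prod[OF extends_psem[OF Z3(1)] Z3(2)] unfolding Bmat_def by blast
  obtain Z5 d5 where Z5: "extends n Z4 d4 Z5 d5"
    "pcomp n Z5 d5 (\<lambda>X x y. \<Sum>k<n. Amat v (EA v u w E) X x k * Bmat v (EB v u w E) X k y)"
    using op_mm[OF extends_psem[OF Z4(1)] extends_comp[OF extends_trans[OF Z3(1) Z4(1)] Z2(2)] Z4(2)] by blast
  have "pcomp n Z5 d5 (Mnew n v u w E)" using Z5(2) unfolding Mnew_def[abs_def] .
  then show ?thesis
    using extends_trans[OF Z1(1) extends_trans[OF Z2(1) extends_trans[OF Z3(1) extends_trans[OF Z4(1) Z5(1)]]]] by blast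
qed

lemma spairs_prop:
  assumes "\<forall>e\<in>#E. fst e \<in> W \<and> fst (snd e) \<in> W"
  shows "\<forall>p\<in>spairs E. \<exists>x y. p = {x, y} \<and> x \<noteq> y \<and> x \<in> W \<and> y \<in> W"
  using assms unfolding spairs_def by fastforce

lemma finite_spairs: "finite (spairs E)"
  unfolding spairs_def by simp

lemma nbrs:
  assumes ends: "\<forall>e\<in>#E. fst e \<in> W \<and> fst (snd e) \<in> W" and v: "v \<in> W" and a: "a \<in> W - {v}"
    and c2: "card (pv (spairs E) v) \<le> 2"
  shows "\<exists>u w. u \<in> W - {v} \<and> w \<in> W - {v} \<and> (\<forall>e\<in>#E. incid v e \<longrightarrow> fst e \<in> {v, u, w} \<and> fst (snd e) \<in> {v, u, w})
     \<and> (u \<noteq> w \<longrightarrow> {v, u} \<in> spairs E \<and> {v, w} \<in> spairs E)"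
proof -
  define Nb where "Nb = {x. x \<noteq> v \<and> {v, x} \<in> spairs E}"
  have NbW: "Nb \<subseteq> W - {v}"
  proof
    fix x assume "x \<in> Nb"
    then obtain e where e: "e \<in># E" "fst e \<noteq> fst (snd e)" "{v, x} = {fst e, fst (snd e)}" "x \<noteq> v"
      unfolding Nb_def spairs_def by auto
    then have "x \<in> {fst e, fst (snd e)}" by auto
    then show "x \<in> W - {v}" using ends e by auto
  qed
  have finNb: "finite Nb"
  proof -
    have "inj_on (\<lambda>x. {v, x}) Nb" unfolding Nb_def by (auto intro!: inj_onI simp: doubleton_eq_iff)
    moreover have "(\<lambda>x. {v, x}) ` Nb \<subseteq> spairs E" unfolding Nb_def by auto
    ultimately show ?thesis using finite_spairs by (meson finite_imageD finite_subset)
  qed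
  have cNb: "card Nb \<le> 2"
  proof -
    have inj: "inj_on (\<lambda>x. {v, x}) Nb" unfolding Nb_def by (auto intro!: inj_onI simp: doubleton_eq_iff)
    have "(\<lambda>x. {v, x}) ` Nb \<subseteq> pv (spairs E) v" unfolding Nb_def pv_def by auto
    then have "card ((\<lambda>x. {v, x}) ` Nb) \<le> card (pv (spairs E) v)"
      by (rule card_mono[rotated]) (use finite_spairs in \<open>simp add: pv_def\<close>)
    then show ?thesis using c2 card_image[OF inj] by simp
  qed
  have inc: "fst e \<in> insert v Nb \<and> fst (snd e) \<in> insert v Nb" if "e \<in># E" "incid v e" for e
  proof (cases "fst e = fst (snd e)")
    case True then show ?thesis using that unfolding incid_def by auto
  next
    case False
    then have "{fst e, fst (snd e)} \<in> spairs E" using that unfolding spairs_def by auto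
    then show ?thesis using that False unfolding incid_def Nb_def by (auto simp: insert_commute)
  qed
  obtain u w where uw: "u \<in> W - {v}" "w \<in> W - {v}" "Nb \<subseteq> {u, w}" "u \<noteq> w \<longrightarrow> u \<in> Nb \<and> w \<in> Nb"
  proof (cases "card Nb")
    case 0 then have "Nb = {}" using finNb by simp
    then show ?thesis using that[of a a] a by auto
  next
    case (Suc k)
    show ?thesis
    proof (cases k)
      case 0
      then have "card Nb = 1" using Suc by simp
      then obtain x where "Nb = {x}" by (rule card_1_singletonE)
      then show ?thesis using that[of x x] NbW by auto
    next
      case (Suc k')
      then have "card Nb = 2" using cNb \<open>card Nb = Suc k\<close> by simp
      then obtain x y where "Nb = {x, y}" "x \<noteq> y" by (meson card_2_iff)
      then show ?thesis using that[of x y] NbW by auto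
    qed
  qed
  have "\<forall>e\<in>#E. incid v e \<longrightarrow> fst e \<in> {v, u, w} \<and> fst (snd e) \<in> {v, u, w}"
    using inc uw(3) by blast
  moreover have "u \<noteq> w \<longrightarrow> {v, u} \<in> spairs E \<and> {v, w} \<in> spairs E" using uw(4) unfolding Nb_def by auto
  ultimately show ?thesis using uw(1,2) by blast
qed

lemma spairs_new:
  assumes "u \<noteq> w \<longrightarrow> {v, u} \<in> spairs E \<and> {v, w} \<in> spairs E" "u \<noteq> v" "w \<noteq> v"
  shows "card (spairs (ER v E + {#(u, w, M)#})) \<le> card (spairs E)"
proof -
  let ?S = "spairs E" and ?pv = "pv (spairs E) v"
  have sub: "spairs (ER v E + {#(u, w, M)#}) \<subseteq> (?S - ?pv) \<union> (if u \<noteq> w then {{u, w}} else {})"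
  proof
    fix x assume "x \<in> spairs (ER v E + {#(u, w, M)#})"
    then obtain e where e: "e \<in># ER v E + {#(u, w, M)#}" "fst e \<noteq> fst (snd e)" "x = {fst e, fst (snd e)}"
      unfolding spairs_def by auto
    show "x \<in> (?S - ?pv) \<union> (if u \<noteq> w then {{u, w}} else {})"
    proof (cases "e = (u, w, M)")
      case True then show ?thesis using e by auto
    next
      case False
      then have "e \<in># E" "\<not> incid v e" using e(1) unfolding ER_def by auto
      then have "x \<in> ?S" "v \<notin> x" using e unfolding spairs_def incid_def by auto
      then show ?thesis unfolding pv_def by auto
    qed
  qed
  have pvS: "?pv \<subseteq> ?S" unfolding pv_def by auto
  have fin: "finite ?S" "finite ?pv" using finite_spairs pvS finite_subset by blast+
  have "card (spairs (ER v E + {#(u, w, M)#})) \<le> card ((?S - ?pv) \<union> (if u \<noteq> w then {{u, w}} else {}))"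
    by (rule card_mono[OF _ sub]) (use fin in simp)
  also have "\<dots> \<le> card (?S - ?pv) + card (if u \<noteq> w then {{u, w}} else ({} :: nat set set))"
    by (rule card_Un_le)
  also have "card (?S - ?pv) = card ?S - card ?pv" by (rule card_Diff_subset[OF fin(2) pvS])
  finally have c: "card (spairs (ER v E + {#(u, w, M)#})) \<le> card ?S - card ?pv + (if u \<noteq> w then 1 else 0)"
    by (simp split: if_splits)
  have "card ?pv \<le> card ?S" by (rule card_mono[OF fin(1) pvS])
  moreover have "u \<noteq> w \<Longrightarrow> card ?pv \<ge> 2"
  proof -
    assume uw: "u \<noteq> w"
    then have "{{v, u}, {v, w}} \<subseteq> ?pv" using assms unfolding pv_def by auto
    then have "card {{v, u}, {v, w}} \<le> card ?pv" by (rule card_mono[OF fin(2)])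
    moreover have "card {{v, u}, {v, w}} = 2" using uw by (auto simp: doubleton_eq_iff)
    ultimately show ?thesis by simp
  qed
  moreover have "card ?pv \<ge> 0" by simp
  ultimately show ?thesis using c by (cases "u = w") auto
qed

lemma pattern_comp:
  "\<forall>W E Z d. card W = N \<longrightarrow> finite W \<longrightarrow> a \<in> W \<longrightarrow> b \<in> W \<longrightarrow> (\<forall>e\<in>#E. fst e \<in> W \<and> fst (snd e) \<in> W)
     \<longrightarrow> card (spairs E) \<le> (if a = b then 5 else 4) \<longrightarrow> psem n d Z \<longrightarrow> (\<forall>e\<in>#E. pcomp n Z d (snd (snd e)))
     \<longrightarrow> (\<exists>Z' d'. extends n Z d Z' d' \<and> pcomp n Z' d' (lval n W E a b))"
proof (induction N)
  case 0
  then show ?case by auto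
next
  case (Suc N)
  show ?case
  proof (intro allI impI)
    fix W E Z d
    assume cW: "card W = Suc N" and finW: "finite W" and a: "a \<in> W" and b: "b \<in> W"
      and ends: "\<forall>e\<in>#E. fst e \<in> W \<and> fst (snd e) \<in> W"
      and cp: "card (spairs E) \<le> (if a = b then 5 else 4)" and Z: "psem n d Z"
      and labs: "\<forall>e\<in>#E. pcomp n Z d (snd (snd e))"
    show "\<exists>Z' d'. extends n Z d Z' d' \<and> pcomp n Z' d' (lval n W E a b)"
    proof (cases "W - {a, b} = {}")
      case True
      then have "W = {a, b}" using a b by auto
      then show ?thesis using base_comp ends Z labs by blast
    next
      case False
      obtain v where v: "v \<in> W - {a, b}" "card (pv (spairs E) v) \<le> 2"
        using elim_exists[OF finW a b spairs_prop[OF ends] cp False] by blast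
      have av: "a \<in> W - {v}" "b \<in> W - {v}" using v a b by auto
      obtain u w where uw: "u \<in> W - {v}" "w \<in> W - {v}"
        "\<forall>e\<in>#E. incid v e \<longrightarrow> fst e \<in> {v, u, w} \<and> fst (snd e) \<in> {v, u, w}"
        "u \<noteq> w \<longrightarrow> {v, u} \<in> spairs E \<and> {v, w} \<in> spairs E"
        using nbrs[OF ends _ av(1) v(2)] v by blast
      obtain Z1 d1 where Z1: "extends n Z d Z1 d1" "pcomp n Z1 d1 (Mnew n v u w E)"
        using Mnew_comp[OF Z labs] by blast
      define E' where "E' = ER v E + {#(u, w, Mnew n v u w E)#}"
      have labs': "\<forall>e\<in>#E'. pcomp n Z1 d1 (snd (snd e))"
        using Z1 extends_comp[OF Z1(1)] labs unfolding E'_def ER_def by auto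
      have ends': "\<forall>e\<in>#E'. fst e \<in> W - {v} \<and> fst (snd e) \<in> W - {v}"
        using ends uw unfolding E'_def ER_def incid_def by auto
      have cp': "card (spairs E') \<le> (if a = b then 5 else 4)"
      proof -
        have "u \<noteq> v" "w \<noteq> v" using uw(1,2) by auto
        then have "card (spairs E') \<le> card (spairs E)" unfolding E'_def by (rule spairs_new[OF uw(4)])
        then show ?thesis using cp by linarith
      qed
      have cW': "card (W - {v}) = N" using cW v by simp
      have fW': "finite (W - {v})" using finW by simp
      have "\<exists>Z' d'. extends n Z1 d1 Z' d' \<and> pcomp n Z' d' (lval n (W - {v}) E' a b)"
        using Suc.IH[THEN spec[of _ "W - {v}"], THEN spec[of _ E'], THEN spec[of _ Z1], THEN spec[of _ d1]]
          cW' fW' av ends' cp' extends_psem[OF Z1(1)] labs' by blast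
      then obtain Z2 d2 where Z2: "extends n Z1 d1 Z2 d2" "pcomp n Z2 d2 (lval n (W - {v}) E' a b)" by blast
      have "pcomp n Z2 d2 (lval n W E a b)"
        by (rule pcomp_cong[OF Z2(2)]) (use elim_value[OF finW _ av uw(1,2,3)] v in \<open>auto simp: E'_def\<close>)
      then show ?thesis using extends_trans[OF Z1(1) Z2(1)] by blast
    qed
  qed
qed

lemma card_set_mset_le: "card (set_mset M) \<le> size M"
proof (induction M)
  case empty then show ?case by simp
next
  case (add x M)
  have "card (set_mset (add_mset x M)) \<le> Suc (card (set_mset M))"
    by (simp add: card_insert_if)
  then show ?case using add by simp
qed

definition liftE :: "(nat \<times> nat) multiset \<Rightarrow> (nat \<times> nat \<times> MLab) multiset" where
  "liftE E = image_mset (\<lambda>(r, s). (r, s, \<lambda>X. X)) E"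

lemma hom_lval:
  assumes "\<not> (a = b \<and> i \<noteq> j)"
  shows "hom_poly n m E a b X i j = lval n {..<m} (liftE E) a b X i j"
proof -
  have "(\<Prod>e\<in>#liftE E. snd (snd e) X (\<phi> (fst e)) (\<phi> (fst (snd e)))) =
        prod_mset (image_mset (\<lambda>e. X (\<phi> (fst e)) (\<phi> (snd e))) E)" for \<phi>
    unfolding liftE_def by (simp add: image_mset.compositionality o_def case_prod_beta)
  then show ?thesis unfolding hom_poly_def lval_def by (simp only: if_not_P[OF assms])
qed

lemma spairs_liftE: "card (spairs (liftE E)) \<le> size E"
proof -
  have "card (spairs (liftE E)) \<le> card {e\<in>set_mset (liftE E). fst e \<noteq> fst (snd e)}"
    unfolding spairs_def by (rule card_image_le) simp
  also have "\<dots> \<le> card (set_mset (liftE E))" by (rule card_mono) auto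
  also have "\<dots> \<le> size (liftE E)" by (rule card_set_mset_le)
  also have "\<dots> = size E" unfolding liftE_def by simp
  finally show ?thesis .
qed

lemma ppgn_hom:
  assumes cont: "continuous_on UNIV \<sigma>" and np: "non_polynomial \<sigma>"
    and H: "is_multigraph_output m E a b" and sz: "size E \<le> (if a = b then 5 else 4)"
  shows "\<exists>F. ppgn \<sigma> n F \<and> (\<forall>X\<in>simple_adj n. \<forall>i<n. \<forall>j<n. \<not> (a = b \<and> i \<noteq> j) \<longrightarrow> F X i j = hom_poly n m E a b X i j)"
proof -
  define Z0 where "Z0 = (\<lambda>(X::nat\<Rightarrow>nat\<Rightarrow>real) (i::nat) (j::nat) (c::nat). if c = 0 then X i j else (0::real))"
  have Z0: "psem n 1 Z0" unfolding Z0_def by (rule ps_init)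
  have labs: "\<forall>e\<in>#liftE E. pcomp n Z0 1 (snd (snd e))"
    unfolding liftE_def pcomp_def Z0_def by auto
  have ends: "\<forall>e\<in>#liftE E. fst e \<in> {..<m} \<and> fst (snd e) \<in> {..<m}"
    using H unfolding liftE_def is_multigraph_output_def by auto
  have ab: "a \<in> {..<m}" "b \<in> {..<m}" using H unfolding is_multigraph_output_def by auto
  have cp: "card (spairs (liftE E)) \<le> (if a = b then 5 else 4)" using spairs_liftE[of E] sz by linarith
  obtain Z' d' where Z': "extends n Z0 1 Z' d'" "pcomp n Z' d' (lval n {..<m} (liftE E) a b)"
    using pattern_comp[where N = m and a = a and b = b and n = n, THEN spec[of _ "{..<m}"], THEN spec[of _ "liftE E"], THEN spec[of _ Z0], THEN spec[of _ 1]]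
      ab ends cp Z0 labs by (simp; blast)
  obtain c where c: "c < d'" "\<forall>X\<in>simple_adj n. \<forall>i<n. \<forall>j<n. Z' X i j c = lval n {..<m} (liftE E) a b X i j"
    using Z'(2) unfolding pcomp_def by blast
  obtain Z'' where Z'': "ppgn_layers \<sigma> n d' Z''" "\<forall>X\<in>simple_adj n. \<forall>i<n. \<forall>j<n. \<forall>c<d'. Z'' X i j c = Z' X i j c"
    using psem_real[OF cont np extends_psem[OF Z'(1)]] by blast
  define F where "F = (\<lambda>X i j. Z'' X i j c)"
  have "ppgn \<sigma> n F" unfolding ppgn_def F_def using Z''(1) c(1) by blast
  moreover have "\<forall>X\<in>simple_adj n. \<forall>i<n. \<forall>j<n. \<not> (a = b \<and> i \<noteq> j) \<longrightarrow> F X i j = hom_poly n m E a b X i j"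
    unfolding F_def using Z''(2) c hom_lval by simp
  ultimately show ?thesis by blast
qed

inductive msem :: "nat \<Rightarrow> nat \<Rightarrow> ((nat \<Rightarrow> nat \<Rightarrow> real) \<Rightarrow> (nat \<Rightarrow> nat \<Rightarrow> real)) \<Rightarrow> bool" for n where
  ms_init: "msem n 1 (\<lambda>X i c. if c = 0 then 1 else 0)"
| ms_step: "msem n d Y \<Longrightarrow> msem n d' (\<lambda>X i. m (restr (3 * d) (mpnn_concat n d X (Y X) i)))"

lemma msem_real:
  assumes cont: "continuous_on UNIV \<sigma>" and np: "non_polynomial \<sigma>"
  shows "msem n d Y \<Longrightarrow> \<exists>Y'. mpnn_layers \<sigma> n d Y' \<and> (\<forall>X\<in>simple_adj n. \<forall>i<n. \<forall>c<d. Y' X i c = Y X i c)"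
proof (induction rule: msem.induct)
  case ms_init
  show ?case by (rule exI, rule conjI, rule mpnn_init) auto
next
  case (ms_step d Y d' m)
  obtain Y' where Y': "mpnn_layers \<sigma> n d Y'" "\<forall>X\<in>simple_adj n. \<forall>i<n. \<forall>c<d. Y' X i c = Y X i c"
    using ms_step.IH by blast
  define D where "D = (\<lambda>(X, i). restr (3 * d) (mpnn_concat n d X (Y X) i)) ` (simple_adj n \<times> {..<n})"
  have finD: "finite D" unfolding D_def using finite_simple_adj by simp
  have resD: "\<forall>x\<in>D. \<forall>c\<ge>3 * d. x c = 0" unfolding D_def restr_def by auto
  obtain f where f: "mlp \<sigma> (3 * d) d' f" "\<forall>x\<in>D. \<forall>c<d'. f x c = m x c"
    using mlp_interp[OF cont np finD resD] by blast
  define Y'' where "Y'' X i = f (mpnn_concat n d X (Y' X) i)" for X i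
  have "mpnn_layers \<sigma> n d' Y''" unfolding Y''_def by (rule mpnn_step[OF Y'(1) f(1)])
  moreover have "Y'' X i c = m (restr (3 * d) (mpnn_concat n d X (Y X) i)) c"
    if X: "X \<in> simple_adj n" and i: "i < n" and c: "c < d'" for X i c
  proof -
    have r: "restr (3 * d) (mpnn_concat n d X (Y' X) i) = restr (3 * d) (mpnn_concat n d X (Y X) i)"
      by (rule restr_eq) (use Y'(2) X i in \<open>auto simp: mpnn_concat_def intro!: sum.cong\<close>)
    have "Y'' X i c = f (restr (3 * d) (mpnn_concat n d X (Y X) i)) c"
      unfolding Y''_def using mlp_restr[OF f(1), of "mpnn_concat n d X (Y' X) i"] r by simp
    also have "\<dots> = m (restr (3 * d) (mpnn_concat n d X (Y X) i)) c"
      using f(2) c X i unfolding D_def by auto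
    finally show ?thesis .
  qed
  ultimately show ?case by blast
qed

definition mcomp :: "nat \<Rightarrow> ((nat \<Rightarrow> nat \<Rightarrow> real) \<Rightarrow> (nat \<Rightarrow> nat \<Rightarrow> real)) \<Rightarrow> nat
   \<Rightarrow> ((nat \<Rightarrow> nat \<Rightarrow> real) \<Rightarrow> nat \<Rightarrow> real) \<Rightarrow> bool" where
  "mcomp n Y d g \<longleftrightarrow> (\<exists>c<d. \<forall>X\<in>simple_adj n. \<forall>i<n. Y X i c = g X i)"

definition mext :: "nat \<Rightarrow> ((nat \<Rightarrow> nat \<Rightarrow> real) \<Rightarrow> (nat \<Rightarrow> nat \<Rightarrow> real)) \<Rightarrow> nat
   \<Rightarrow> ((nat \<Rightarrow> nat \<Rightarrow> real) \<Rightarrow> (nat \<Rightarrow> nat \<Rightarrow> real)) \<Rightarrow> nat \<Rightarrow> bool" where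
  "mext n Y d Y' d' \<longleftrightarrow> msem n d' Y' \<and> (\<forall>g. mcomp n Y d g \<longrightarrow> mcomp n Y' d' g)"

lemma mext_refl: "msem n d Y \<Longrightarrow> mext n Y d Y d" unfolding mext_def by auto
lemma mext_trans: "mext n Y d Y' d' \<Longrightarrow> mext n Y' d' Y'' d'' \<Longrightarrow> mext n Y d Y'' d''"
  unfolding mext_def by auto
lemma mext_msem: "mext n Y d Y' d' \<Longrightarrow> msem n d' Y'" unfolding mext_def by auto
lemma mext_comp: "mext n Y d Y' d' \<Longrightarrow> mcomp n Y d g \<Longrightarrow> mcomp n Y' d' g" unfolding mext_def by auto
lemma mcomp_cong: "mcomp n Y d g \<Longrightarrow> (\<forall>X\<in>simple_adj n. \<forall>i<n. g X i = g' X i) \<Longrightarrow> mcomp n Y d g'"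
  unfolding mcomp_def by auto

lemma mop:
  assumes "msem n d Y"
  shows "\<exists>Y' d'. mext n Y d Y' d' \<and> mcomp n Y' d' (\<lambda>X i. h (restr (3 * d) (mpnn_concat n d X (Y X) i)))"
proof -
  define m where "m w = (\<lambda>c::nat. if c < d then w (c + 2 * d) else if c = d then h w else 0)" for w
  let ?Y' = "\<lambda>X i. m (restr (3 * d) (mpnn_concat n d X (Y X) i))"
  have "msem n (Suc d) ?Y'" by (rule ms_step[OF assms])
  moreover have "?Y' X i c = Y X i c" if "c < d" for X i c
    using that unfolding m_def restr_def mpnn_concat_def by simp
  moreover have "?Y' X i d = h (restr (3 * d) (mpnn_concat n d X (Y X) i))" for X i
    unfolding m_def by simp
  ultimately have "mext n Y d ?Y' (Suc d)" "mcomp n ?Y' (Suc d) (\<lambda>X i. h (restr (3 * d) (mpnn_concat n d X (Y X) i)))"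
    unfolding mext_def mcomp_def by (metis less_SucI, blast)
  then show ?thesis by blast
qed

lemma mop_fun2:
  assumes "msem n d Y" "mcomp n Y d g1" "mcomp n Y d g2"
  shows "\<exists>Y' d'. mext n Y d Y' d' \<and> mcomp n Y' d' (\<lambda>X i. F (g1 X i) (g2 X i))"
proof -
  obtain c1 where c1: "c1 < d" "\<forall>X\<in>simple_adj n. \<forall>i<n. Y X i c1 = g1 X i" using assms(2) unfolding mcomp_def by blast
  obtain c2 where c2: "c2 < d" "\<forall>X\<in>simple_adj n. \<forall>i<n. Y X i c2 = g2 X i" using assms(3) unfolding mcomp_def by blast
  obtain Y' d' where Y': "mext n Y d Y' d'" "mcomp n Y' d' (\<lambda>X i. F (restr (3 * d) (mpnn_concat n d X (Y X) i) (c1 + 2 * d)) (restr (3 * d) (mpnn_concat n d X (Y X) i) (c2 + 2 * d)))"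
    using mop[OF assms(1), of "\<lambda>w. F (w (c1 + 2 * d)) (w (c2 + 2 * d))"] by blast
  have "mcomp n Y' d' (\<lambda>X i. F (g1 X i) (g2 X i))"
    by (rule mcomp_cong[OF Y'(2)]) (use c1 c2 in \<open>simp add: restr_def mpnn_concat_def\<close>)
  then show ?thesis using Y'(1) by blast
qed

lemma mop_const:
  assumes "msem n d Y"
  shows "\<exists>Y' d'. mext n Y d Y' d' \<and> mcomp n Y' d' (\<lambda>X i. k)"
  using mop[OF assms, of "\<lambda>_. k"] by simp

lemma mop_agg:
  assumes "msem n d Y" "mcomp n Y d g"
  shows "\<exists>Y' d'. mext n Y d Y' d' \<and> mcomp n Y' d' (\<lambda>X i. \<Sum>j<n. X i j * g X j)"
proof -
  obtain c1 where c1: "c1 < d" "\<forall>X\<in>simple_adj n. \<forall>i<n. Y X i c1 = g X i" using assms(2) unfolding mcomp_def by blast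
  obtain Y' d' where Y': "mext n Y d Y' d'" "mcomp n Y' d' (\<lambda>X i. restr (3 * d) (mpnn_concat n d X (Y X) i) c1)"
    using mop[OF assms(1), of "\<lambda>w. w c1"] by blast
  have "mcomp n Y' d' (\<lambda>X i. \<Sum>j<n. X i j * g X j)"
    by (rule mcomp_cong[OF Y'(2)]) (use c1 in \<open>simp add: restr_def mpnn_concat_def\<close>)
  then show ?thesis using Y'(1) by blast
qed

lemma mop_tot:
  assumes "msem n d Y" "mcomp n Y d g"
  shows "\<exists>Y' d'. mext n Y d Y' d' \<and> mcomp n Y' d' (\<lambda>X i. \<Sum>j<n. g X j)"
proof -
  obtain c1 where c1: "c1 < d" "\<forall>X\<in>simple_adj n. \<forall>i<n. Y X i c1 = g X i" using assms(2) unfolding mcomp_def by blast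
  obtain Y' d' where Y': "mext n Y d Y' d'" "mcomp n Y' d' (\<lambda>X i. restr (3 * d) (mpnn_concat n d X (Y X) i) (c1 + d))"
    using mop[OF assms(1), of "\<lambda>w. w (c1 + d)"] by blast
  have "mcomp n Y' d' (\<lambda>X i. \<Sum>j<n. g X j)"
    by (rule mcomp_cong[OF Y'(2)]) (use c1 in \<open>simp add: restr_def mpnn_concat_def\<close>)
  then show ?thesis using Y'(1) by blast
qed

type_synonym NLab = "(nat \<Rightarrow> nat \<Rightarrow> real) \<Rightarrow> nat \<Rightarrow> real"

definition nval :: "nat \<Rightarrow> nat set \<Rightarrow> (nat \<times> nat) multiset \<Rightarrow> (nat \<Rightarrow> NLab) \<Rightarrow> nat \<Rightarrow> NLab" where
  "nval n W E N a X i = (\<Sum>\<phi>\<in>{\<phi>\<in>PiE W (\<lambda>_. {..<n}). \<phi> a = i}.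
       (\<Prod>v\<in>W. N v X (\<phi> v)) * (\<Prod>e\<in>#E. X (\<phi> (fst e)) (\<phi> (snd e))))"

definition spairs2 :: "(nat \<times> nat) multiset \<Rightarrow> nat set set" where
  "spairs2 E = (\<lambda>e. {fst e, snd e}) ` set_mset E"

definition incid2 :: "nat \<Rightarrow> nat \<times> nat \<Rightarrow> bool" where
  "incid2 v e \<longleftrightarrow> fst e = v \<or> snd e = v"

lemma elim2_exists:
  assumes finW: "finite W" and a: "a \<in> W"
    and P: "\<forall>p\<in>P. \<exists>x y. p = {x, y} \<and> x \<noteq> y \<and> x \<in> W \<and> y \<in> W"
    and cP: "card P \<le> 2" and U: "W - {a} \<noteq> {}"
  shows "\<exists>v\<in>W - {a}. card (pv P v) \<le> 1"
proof (rule ccontr)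
  assume "\<not> ?thesis"
  then have all2: "\<forall>v\<in>W - {a}. card (pv P v) \<ge> 2"
  proof (intro ballI)
    fix v assume "\<not> (\<exists>v\<in>W - {a}. card (pv P v) \<le> 1)" "v \<in> W - {a}"
    then have "\<not> card (pv P v) \<le> 1" by blast
    then show "card (pv P v) \<ge> 2" by simp
  qed
  have P2: "\<forall>p\<in>P. \<exists>x y. p = {x, y} \<and> x \<noteq> y"
  proof
    fix p assume "p \<in> P"
    then obtain x y where "p = {x, y} \<and> x \<noteq> y" using P by meson
    then show "\<exists>x y. p = {x, y} \<and> x \<noteq> y" by (intro exI)
  qed
  have PW: "P \<subseteq> Pow W"
  proof
    fix p assume "p \<in> P"
    then obtain x y where "p = {x, y}" "x \<in> W" "y \<in> W" using P by meson
    then show "p \<in> Pow W" by simp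
  qed
  have finP: "finite P" by (rule finite_subset[OF PW]) (use finW in simp)
  have finpv: "finite (pv P u)" for u using finP unfolding pv_def by simp
  obtain v where v: "v \<in> W - {a}" using U by blast
  have c2: "card (pv P v) \<ge> 2" using all2 v by blast
  have "card (pv P v - {{v, a}}) \<ge> 1"
    using c2 card_Diff_singleton_if[of "pv P v" "{v,a}"] finpv[of v] by (auto split: if_splits)
  then have "pv P v - {{v, a}} \<noteq> {}" by (intro notI) simp
  then obtain p where p: "p \<in> pv P v" "p \<noteq> {v, a}" by blast
  then have pP: "p \<in> P" "v \<in> p" unfolding pv_def by auto
  then obtain x y where xy: "p = {x, y}" "x \<noteq> y" "x \<in> W" "y \<in> W" using P by blast
  obtain w where w: "p = {v, w}" "w \<noteq> v" "w \<in> W"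
  proof (cases "v = x")
    case True then show ?thesis using that[of y] xy by auto
  next
    case False then have "v = y" using xy pP by auto
    then show ?thesis using that[of x] xy by auto
  qed
  have wa: "w \<noteq> a" using p(2) w by auto
  have "card (pv P w) \<ge> 2" using all2 w wa by blast
  then have "card (pv P v \<union> pv P w) \<ge> 3" using card_union_pv[OF P2 finP, of v w] w c2 by linarith
  moreover have "card (pv P v \<union> pv P w) \<le> card P" by (rule card_mono[OF finP]) (auto simp: pv_def)
  ultimately show False using cP by simp
qed

lemma prod_const01:
  assumes "M \<noteq> {#}" "\<forall>e\<in>#M. f e = t" "t = 0 \<or> t = (1::real)"
  shows "(\<Prod>e\<in>#M. f e) = t"
  using assms
proof (induction M)
  case empty then show ?case by simp
next
  case (add x M)
  show ?case
  proof (cases "M = {#}")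
    case True then show ?thesis using add by simp
  next
    case False then show ?thesis using add by auto
  qed
qed

lemma nval_split:
  assumes finW: "finite W" and v: "v \<in> W" and a: "a \<in> W - {v}"
    and step: "\<And>\<psi>. \<psi> \<in> PiE (W - {v}) (\<lambda>_. {..<n}) \<Longrightarrow> (\<Sum>k<n. (\<Prod>v'\<in>W. N v' X ((\<psi>(v := k)) v')) * (\<Prod>e\<in>#E. X ((\<psi>(v := k)) (fst e)) ((\<psi>(v := k)) (snd e))))
        = (\<Prod>v'\<in>W - {v}. N' v' X (\<psi> v')) * (\<Prod>e\<in>#E'. X (\<psi> (fst e)) (\<psi> (snd e)))"
  shows "nval n W E N a X i = nval n (W - {v}) E' N' a X i"
proof -
  define W' where "W' = W - {v}"
  have W: "W = insert v W'" "v \<notin> W'" "finite W'" using v finW unfolding W'_def by auto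
  have finP: "finite (PiE W (\<lambda>_. {..<n}))" "finite (PiE W' (\<lambda>_. {..<n}))"
    using W finW by (auto intro: finite_PiE)
  define P where "P \<phi> = (\<Prod>v'\<in>W. N v' X (\<phi> v')) * (\<Prod>e\<in>#E. X (\<phi> (fst e)) (\<phi> (snd e)))" for \<phi> :: "nat \<Rightarrow> nat"
  define P' where "P' \<phi> = (\<Prod>v'\<in>W'. N' v' X (\<phi> v')) * (\<Prod>e\<in>#E'. X (\<phi> (fst e)) (\<phi> (snd e)))" for \<phi> :: "nat \<Rightarrow> nat"
  have "nval n W E N a X i = (\<Sum>\<phi>\<in>PiE W (\<lambda>_. {..<n}). if \<phi> a = i then P \<phi> else 0)"
    unfolding nval_def P_def by (rule sum.inter_filter[OF finP(1)])
  also have "\<dots> = (\<Sum>\<psi>\<in>PiE W' (\<lambda>_. {..<n}). \<Sum>k\<in>{..<n}. if (\<psi>(v := k)) a = i then P (\<psi>(v := k)) else 0)"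
    unfolding W(1) by (rule sum_PiE_insert) (use W in auto)
  also have "\<dots> = (\<Sum>\<psi>\<in>PiE W' (\<lambda>_. {..<n}). if \<psi> a = i then P' \<psi> else 0)"
  proof (rule sum.cong[OF refl])
    fix \<psi> assume \<psi>: "\<psi> \<in> PiE W' (\<lambda>_. {..<n})"
    have "a \<noteq> v" using a by auto
    then show "(\<Sum>k\<in>{..<n}. if (\<psi>(v := k)) a = i then P (\<psi>(v := k)) else 0) = (if \<psi> a = i then P' \<psi> else 0)"
      using step[OF \<psi>[unfolded W'_def]] unfolding P_def P'_def W'_def W(1)[symmetric] by auto
  qed
  also have "\<dots> = nval n W' E' N' a X i"
    unfolding nval_def P'_def by (rule sum.inter_filter[OF finP(2), symmetric])
  finally show ?thesis unfolding W'_def .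
qed

lemma prod_insert_upd:
  assumes "finite W'" "v \<notin> W'"
  shows "(\<Prod>v'\<in>insert v W'. N v' X ((\<psi>(v := k)) v')) = N v X k * (\<Prod>v'\<in>W'. N v' X (\<psi> v'))"
proof -
  have "(\<Prod>v'\<in>W'. N v' X ((\<psi>(v := k)) v')) = (\<Prod>v'\<in>W'. N v' X (\<psi> v'))"
    by (rule prod.cong) (use assms in auto)
  then show ?thesis using assms by simp
qed

lemma prod_upd_node:
  assumes "finite W'" "u \<in> W'"
  shows "(\<Prod>v'\<in>W'. (N(u := (\<lambda>X x. N u X x * s X x))) v' X (\<psi> v')) = s X (\<psi> u) * (\<Prod>v'\<in>W'. N v' X (\<psi> v'))"
proof -
  have "(\<Prod>v'\<in>W'. (N(u := (\<lambda>X x. N u X x * s X x))) v' X (\<psi> v')) =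
        (N u X (\<psi> u) * s X (\<psi> u)) * (\<Prod>v'\<in>W' - {u}. N v' X (\<psi> v'))"
    using assms by (subst prod.remove[of _ u]) (auto intro!: prod.cong)
  also have "\<dots> = s X (\<psi> u) * (\<Prod>v'\<in>W'. N v' X (\<psi> v'))"
    using assms by (subst (2) prod.remove[of _ u]) (auto simp: mult_ac)
  finally show ?thesis .
qed

lemma nval_elim0:
  assumes finW: "finite W" and v: "v \<in> W" and a: "a \<in> W - {v}"
    and noe: "\<forall>e\<in>#E. \<not> incid2 v e"
  shows "nval n W E N a X i = nval n (W - {v}) E (N(a := (\<lambda>X x. N a X x * (\<Sum>k<n. N v X k)))) a X i"
proof (rule nval_split[OF finW v a])
  fix \<psi>
  have W: "W = insert v (W - {v})" "v \<notin> W - {v}" "finite (W - {v})" using v finW by auto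
  have pe: "(\<Prod>e\<in>#E. X ((\<psi>(v := k)) (fst e)) ((\<psi>(v := k)) (snd e))) = (\<Prod>e\<in>#E. X (\<psi> (fst e)) (\<psi> (snd e)))" for k
    by (rule arg_cong[where f = prod_mset], rule image_mset_cong) (use noe in \<open>auto simp: incid2_def\<close>)
  have "(\<Sum>k<n. (\<Prod>v'\<in>W. N v' X ((\<psi>(v := k)) v')) * (\<Prod>e\<in>#E. X ((\<psi>(v := k)) (fst e)) ((\<psi>(v := k)) (snd e))))
      = (\<Sum>k<n. N v X k * (\<Prod>v'\<in>W - {v}. N v' X (\<psi> v')) * (\<Prod>e\<in>#E. X (\<psi> (fst e)) (\<psi> (snd e))))"
    by (subst W(1), simp only: prod_insert_upd[OF W(3) W(2)] pe)
  also have "\<dots> = (\<Sum>k<n. N v X k) * (\<Prod>v'\<in>W - {v}. N v' X (\<psi> v')) * (\<Prod>e\<in>#E. X (\<psi> (fst e)) (\<psi> (snd e)))"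
    by (simp add: sum_distrib_right)
  also have "\<dots> = (\<Prod>v'\<in>W - {v}. (N(a := (\<lambda>X x. N a X x * (\<Sum>k<n. N v X k)))) v' X (\<psi> v')) * (\<Prod>e\<in>#E. X (\<psi> (fst e)) (\<psi> (snd e)))"
    using prod_upd_node[OF W(3) a, of N "\<lambda>X x. \<Sum>k<n. N v X k" X \<psi>] by simp
  finally show "(\<Sum>k<n. (\<Prod>v'\<in>W. N v' X ((\<psi>(v := k)) v')) * (\<Prod>e\<in>#E. X ((\<psi>(v := k)) (fst e)) ((\<psi>(v := k)) (snd e))))
      = (\<Prod>v'\<in>W - {v}. (N(a := (\<lambda>X x. N a X x * (\<Sum>k<n. N v X k)))) v' X (\<psi> v')) * (\<Prod>e\<in>#E. X (\<psi> (fst e)) (\<psi> (snd e)))" .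
qed

lemma nval_elim1:
  assumes finW: "finite W" and v: "v \<in> W" and a: "a \<in> W - {v}" and u: "u \<in> W - {v}"
    and X: "X \<in> simple_adj n"
    and ev: "\<forall>e\<in>#E. incid2 v e \<longrightarrow> (e = (v, u) \<or> e = (u, v))" and ne: "filter_mset (incid2 v) E \<noteq> {#}"
  shows "nval n W E N a X i = nval n (W - {v}) (filter_mset (\<lambda>e. \<not> incid2 v e) E)
             (N(u := (\<lambda>X x. N u X x * (\<Sum>k<n. X x k * N v X k)))) a X i"
proof (rule nval_split[OF finW v a])
  fix \<psi> assume \<psi>: "\<psi> \<in> PiE (W - {v}) (\<lambda>_. {..<n})"
  have W: "W = insert v (W - {v})" "v \<notin> W - {v}" "finite (W - {v})" using v finW by auto
  have uv: "u \<noteq> v" using u by auto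
  have \<psi>u: "\<psi> u < n" using \<psi> u by auto
  have Xs: "X x y = X y x" "X x y = 0 \<or> X x y = 1" if "x < n" "y < n" for x y
    using X that unfolding simple_adj_def by auto
  have split: "E = filter_mset (incid2 v) E + filter_mset (\<lambda>e. \<not> incid2 v e) E" by simp
  have pv: "(\<Prod>e\<in>#filter_mset (incid2 v) E. X ((\<psi>(v := k)) (fst e)) ((\<psi>(v := k)) (snd e))) = X (\<psi> u) k"
    if k: "k < n" for k
  proof (rule prod_const01[OF ne])
    show "\<forall>e\<in>#filter_mset (incid2 v) E. X ((\<psi>(v := k)) (fst e)) ((\<psi>(v := k)) (snd e)) = X (\<psi> u) k"
      using ev uv Xs(1)[OF k \<psi>u] by auto
    show "X (\<psi> u) k = 0 \<or> X (\<psi> u) k = 1" using Xs(2)[OF \<psi>u k] .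
  qed
  have pr: "(\<Prod>e\<in>#filter_mset (\<lambda>e. \<not> incid2 v e) E. X ((\<psi>(v := k)) (fst e)) ((\<psi>(v := k)) (snd e)))
      = (\<Prod>e\<in>#filter_mset (\<lambda>e. \<not> incid2 v e) E. X (\<psi> (fst e)) (\<psi> (snd e)))" for k
    by (rule arg_cong[where f = prod_mset], rule image_mset_cong) (auto simp: incid2_def)
  have "(\<Sum>k<n. (\<Prod>v'\<in>W. N v' X ((\<psi>(v := k)) v')) * (\<Prod>e\<in>#E. X ((\<psi>(v := k)) (fst e)) ((\<psi>(v := k)) (snd e))))
      = (\<Sum>k<n. N v X k * (\<Prod>v'\<in>W - {v}. N v' X (\<psi> v')) * (X (\<psi> u) k *
           (\<Prod>e\<in>#filter_mset (\<lambda>e. \<not> incid2 v e) E. X (\<psi> (fst e)) (\<psi> (snd e)))))"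
  proof (rule sum.cong[OF refl])
    fix k assume "k \<in> {..<n}"
    then have k: "k < n" by simp
    show "(\<Prod>v'\<in>W. N v' X ((\<psi>(v := k)) v')) * (\<Prod>e\<in>#E. X ((\<psi>(v := k)) (fst e)) ((\<psi>(v := k)) (snd e)))
      = N v X k * (\<Prod>v'\<in>W - {v}. N v' X (\<psi> v')) * (X (\<psi> u) k *
           (\<Prod>e\<in>#filter_mset (\<lambda>e. \<not> incid2 v e) E. X (\<psi> (fst e)) (\<psi> (snd e))))"
      apply (subst W(1), simp only: prod_insert_upd[OF W(3) W(2)])
      apply (subst split)
      apply (simp only: image_mset_union prod_mset.union pv[OF k] pr)
      done
  qed
  also have "\<dots> = (\<Sum>k<n. X (\<psi> u) k * N v X k) * (\<Prod>v'\<in>W - {v}. N v' X (\<psi> v')) *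
           (\<Prod>e\<in>#filter_mset (\<lambda>e. \<not> incid2 v e) E. X (\<psi> (fst e)) (\<psi> (snd e)))"
    by (simp only: sum_distrib_right) (simp add: mult_ac)
  also have "\<dots> = (\<Prod>v'\<in>W - {v}. (N(u := (\<lambda>X x. N u X x * (\<Sum>k<n. X x k * N v X k)))) v' X (\<psi> v')) *
           (\<Prod>e\<in>#filter_mset (\<lambda>e. \<not> incid2 v e) E. X (\<psi> (fst e)) (\<psi> (snd e)))"
    using prod_upd_node[OF W(3) u, of N "\<lambda>X x. \<Sum>k<n. X x k * N v X k" X \<psi>] by simp
  finally show "(\<Sum>k<n. (\<Prod>v'\<in>W. N v' X ((\<psi>(v := k)) v')) * (\<Prod>e\<in>#E. X ((\<psi>(v := k)) (fst e)) ((\<psi>(v := k)) (snd e))))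
      = (\<Prod>v'\<in>W - {v}. (N(u := (\<lambda>X x. N u X x * (\<Sum>k<n. X x k * N v X k)))) v' X (\<psi> v')) *
           (\<Prod>e\<in>#filter_mset (\<lambda>e. \<not> incid2 v e) E. X (\<psi> (fst e)) (\<psi> (snd e)))" .
qed

lemma nval_base:
  assumes "i < n"
  shows "nval n {a} {#} N a X i = N a X i"
proof -
  define \<phi>0 where "\<phi>0 z = (if z = a then i else undefined)" for z
  have "{\<phi>\<in>PiE {a} (\<lambda>_. {..<n}). \<phi> a = i} = {\<phi>0}"
  proof (intro equalityI subsetI)
    fix \<phi> assume "\<phi> \<in> {\<phi>\<in>PiE {a} (\<lambda>_. {..<n}). \<phi> a = i}"
    then show "\<phi> \<in> {\<phi>0}" unfolding \<phi>0_def by (auto simp: PiE_def extensional_def fun_eq_iff)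
  next
    fix \<phi> assume "\<phi> \<in> {\<phi>0}"
    then show "\<phi> \<in> {\<phi>\<in>PiE {a} (\<lambda>_. {..<n}). \<phi> a = i}"
      unfolding \<phi>0_def using assms by (auto simp: PiE_def extensional_def)
  qed
  then show ?thesis unfolding nval_def \<phi>0_def by simp
qed

lemma spairs2_prop:
  assumes "\<forall>e\<in>#E. fst e \<in> W \<and> snd e \<in> W" "\<forall>e\<in>#E. fst e \<noteq> snd e"
  shows "\<forall>p\<in>spairs2 E. \<exists>x y. p = {x, y} \<and> x \<noteq> y \<and> x \<in> W \<and> y \<in> W"
  using assms unfolding spairs2_def by fastforce

lemma mpattern_comp:
  "\<forall>W E N Y d. card W = K \<longrightarrow> finite W \<longrightarrow> a \<in> W \<longrightarrow> (\<forall>e\<in>#E. fst e \<in> W \<and> snd e \<in> W)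
     \<longrightarrow> (\<forall>e\<in>#E. fst e \<noteq> snd e) \<longrightarrow> card (spairs2 E) \<le> 2 \<longrightarrow> msem n d Y \<longrightarrow> (\<forall>v\<in>W. mcomp n Y d (N v))
     \<longrightarrow> (\<exists>Y' d'. mext n Y d Y' d' \<and> mcomp n Y' d' (nval n W E N a))"
proof (induction K)
  case 0 then show ?case by auto
next
  case (Suc K)
  show ?case
  proof (intro allI impI)
    fix W E N Y d
    assume cW: "card W = Suc K" and finW: "finite W" and a: "a \<in> W"
      and ends: "\<forall>e\<in>#E. fst e \<in> W \<and> snd e \<in> W" and lf: "\<forall>e\<in>#E. fst e \<noteq> snd e"
      and cp: "card (spairs2 E) \<le> 2" and Y: "msem n d Y" and labs: "\<forall>v\<in>W. mcomp n Y d (N v)"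
    show "\<exists>Y' d'. mext n Y d Y' d' \<and> mcomp n Y' d' (nval n W E N a)"
    proof (cases "W - {a} = {}")
      case True
      then have W: "W = {a}" using a by auto
      have E: "E = {#}"
      proof (rule ccontr)
        assume "E \<noteq> {#}"
        then obtain e where e: "e \<in># E" by blast
        then have "fst e = a" "snd e = a" using ends W by auto
        then show False using lf e by auto
      qed
      have "mcomp n Y d (nval n W E N a)"
        by (rule mcomp_cong[of _ _ _ "N a"]) (use labs a W E nval_base in auto)
      then show ?thesis using mext_refl[OF Y] by blast
    next
      case False
      obtain v where v: "v \<in> W - {a}" "card (pv (spairs2 E) v) \<le> 1"
        using elim2_exists[OF finW a spairs2_prop[OF ends lf] cp False] by blast
      have av: "a \<in> W - {v}" using v a by auto
      have cW': "card (W - {v}) = K" using cW v by simp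
      have fW': "finite (W - {v})" using finW by simp
      have finpv: "finite (pv (spairs2 E) v)" unfolding pv_def spairs2_def by simp
      have incpv: "{fst e, snd e} \<in> pv (spairs2 E) v" if "e \<in># E" "incid2 v e" for e
        using that unfolding pv_def spairs2_def incid2_def by auto
      show ?thesis
      proof (cases "card (pv (spairs2 E) v) = 0")
        case True
        then have pv0: "pv (spairs2 E) v = {}" using finpv by simp
        have noe: "\<forall>e\<in>#E. \<not> incid2 v e" using incpv pv0 by blast
        define s where "s X x = (\<Sum>k<n. N v X k)" for X and x :: nat
        obtain Y1 d1 where Y1: "mext n Y d Y1 d1" "mcomp n Y1 d1 (\<lambda>X i. \<Sum>j<n. N v X j)"
          using mop_tot[OF Y] labs v by blast
        obtain Y2 d2 where Y2: "mext n Y1 d1 Y2 d2" "mcomp n Y2 d2 (\<lambda>X i. N a X i * (\<Sum>j<n. N v X j))"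
          using mop_fun2[OF mext_msem[OF Y1(1)] mext_comp[OF Y1(1)] Y1(2), where F = "\<lambda>x y. x * y"] labs a by blast
        define N' where "N' = N(a := (\<lambda>X x. N a X x * (\<Sum>k<n. N v X k)))"
        have labs': "\<forall>v'\<in>W - {v}. mcomp n Y2 d2 (N' v')"
          using Y2(2) mext_comp[OF mext_trans[OF Y1(1) Y2(1)]] labs unfolding N'_def by auto
        have ends': "\<forall>e\<in>#E. fst e \<in> W - {v} \<and> snd e \<in> W - {v}"
          using ends noe unfolding incid2_def by auto
        have "\<exists>Y' d'. mext n Y2 d2 Y' d' \<and> mcomp n Y' d' (nval n (W - {v}) E N' a)"
          using Suc.IH[THEN spec[of _ "W - {v}"], THEN spec[of _ E], THEN spec[of _ N'], THEN spec[of _ Y2], THEN spec[of _ d2]]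
            cW' fW' av ends' lf cp mext_msem[OF Y2(1)] labs' by blast
        then obtain Y3 d3 where Y3: "mext n Y2 d2 Y3 d3" "mcomp n Y3 d3 (nval n (W - {v}) E N' a)" by blast
        have "mcomp n Y3 d3 (nval n W E N a)"
          by (rule mcomp_cong[OF Y3(2)]) (use nval_elim0[OF finW _ av noe] v in \<open>auto simp: N'_def\<close>)
        then show ?thesis using mext_trans[OF Y1(1) mext_trans[OF Y2(1) Y3(1)]] by blast
      next
        case False
        then have "card (pv (spairs2 E) v) = 1" using v by simp
        then obtain p where pp: "pv (spairs2 E) v = {p}" by (rule card_1_singletonE)
        then have "p \<in> spairs2 E" "v \<in> p" unfolding pv_def by auto
        then obtain e0 where e0: "e0 \<in># E" "p = {fst e0, snd e0}" unfolding spairs2_def by auto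
        obtain u where u: "p = {v, u}" "u \<noteq> v" "u \<in> W"
        proof (cases "fst e0 = v")
          case True then show ?thesis using that[of "snd e0"] e0 lf ends by auto
        next
          case False then have "snd e0 = v" using e0 \<open>v \<in> p\<close> by auto
          then show ?thesis using that[of "fst e0"] e0 lf ends by (auto simp: insert_commute)
        qed
        have uW: "u \<in> W - {v}" using u by auto
        have ev: "\<forall>e\<in>#E. incid2 v e \<longrightarrow> (e = (v, u) \<or> e = (u, v))"
        proof (intro ballI impI)
          fix e assume e: "e \<in># E" "incid2 v e"
          have "{fst e, snd e} = {v, u}" using incpv[OF e] pp u(1) by simp
          moreover obtain x y where exy: "e = (x, y)" by (cases e)
          ultimately have "{x, y} = {v, u}" by simp
          then have "(x = v \<and> y = u) \<or> (x = u \<and> y = v)" by (simp add: doubleton_eq_iff)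
          then show "e = (v, u) \<or> e = (u, v)" using exy by auto
        qed
        have ne: "filter_mset (incid2 v) E \<noteq> {#}"
        proof -
          have "incid2 v e0" using e0 u \<open>v \<in> p\<close> unfolding incid2_def by auto
          then have "e0 \<in># filter_mset (incid2 v) E" using e0 by simp
          then show ?thesis by (metis empty_iff set_mset_empty)
        qed
        obtain Y1 d1 where Y1: "mext n Y d Y1 d1" "mcomp n Y1 d1 (\<lambda>X i. \<Sum>j<n. X i j * N v X j)"
          using mop_agg[OF Y] labs v by blast
        obtain Y2 d2 where Y2: "mext n Y1 d1 Y2 d2" "mcomp n Y2 d2 (\<lambda>X i. N u X i * (\<Sum>j<n. X i j * N v X j))"
          using mop_fun2[OF mext_msem[OF Y1(1)] mext_comp[OF Y1(1)] Y1(2), where F = "\<lambda>x y. x * y"] labs u by blast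
        define N' where "N' = N(u := (\<lambda>X x. N u X x * (\<Sum>k<n. X x k * N v X k)))"
        define E' where "E' = filter_mset (\<lambda>e. \<not> incid2 v e) E"
        have labs': "\<forall>v'\<in>W - {v}. mcomp n Y2 d2 (N' v')"
          using Y2(2) mext_comp[OF mext_trans[OF Y1(1) Y2(1)]] labs unfolding N'_def by auto
        have ends': "\<forall>e\<in>#E'. fst e \<in> W - {v} \<and> snd e \<in> W - {v}"
          using ends unfolding E'_def incid2_def by auto
        have lf': "\<forall>e\<in>#E'. fst e \<noteq> snd e" using lf unfolding E'_def by auto
        have cp': "card (spairs2 E') \<le> 2"
        proof -
          have "spairs2 E' \<subseteq> spairs2 E" unfolding spairs2_def E'_def by auto
          then have "card (spairs2 E') \<le> card (spairs2 E)" by (rule card_mono[rotated]) (simp add: spairs2_def)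
          then show ?thesis using cp by simp
        qed
        have "\<exists>Y' d'. mext n Y2 d2 Y' d' \<and> mcomp n Y' d' (nval n (W - {v}) E' N' a)"
          using Suc.IH[THEN spec[of _ "W - {v}"], THEN spec[of _ E'], THEN spec[of _ N'], THEN spec[of _ Y2], THEN spec[of _ d2]]
            cW' fW' av ends' lf' cp' mext_msem[OF Y2(1)] labs' by blast
        then obtain Y3 d3 where Y3: "mext n Y2 d2 Y3 d3" "mcomp n Y3 d3 (nval n (W - {v}) E' N' a)" by blast
        have "mcomp n Y3 d3 (nval n W E N a)"
        proof (rule mcomp_cong[OF Y3(2)], intro ballI allI impI)
          fix X i assume X: "X \<in> simple_adj n" and "i < n"
          show "nval n (W - {v}) E' N' a X i = nval n W E N a X i"
            using nval_elim1[OF finW _ av uW X ev ne] v unfolding N'_def E'_def by auto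
        qed
        then show ?thesis using mext_trans[OF Y1(1) mext_trans[OF Y2(1) Y3(1)]] by blast
      qed
    qed
  qed
qed

lemma spairs2_card: "card (spairs2 E) \<le> size E"
proof -
  have "card (spairs2 E) \<le> card (set_mset E)" unfolding spairs2_def by (rule card_image_le) simp
  also have "\<dots> \<le> size E" by (rule card_set_mset_le)
  finally show ?thesis .
qed

lemma mpnn_from_msem:
  assumes cont: "continuous_on UNIV \<sigma>" and np: "non_polynomial \<sigma>"
    and Y: "msem n d Y" and c: "mcomp n Y d g"
  shows "\<exists>F. mpnn \<sigma> n F \<and> (\<forall>X\<in>simple_adj n. \<forall>i<n. F X i = g X i)"
proof -
  obtain c where c: "c < d" "\<forall>X\<in>simple_adj n. \<forall>i<n. Y X i c = g X i" using c unfolding mcomp_def by blast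
  obtain Y' where Y': "mpnn_layers \<sigma> n d Y'" "\<forall>X\<in>simple_adj n. \<forall>i<n. \<forall>c<d. Y' X i c = Y X i c"
    using msem_real[OF cont np Y] by blast
  define F where "F = (\<lambda>X i. Y' X i c)"
  have "mpnn \<sigma> n F" unfolding mpnn_def F_def using Y'(1) c(1) by blast
  moreover have "\<forall>X\<in>simple_adj n. \<forall>i<n. F X i = g X i" unfolding F_def using Y'(2) c by simp
  ultimately show ?thesis by blast
qed

lemma nval_hom: "nval n {..<m} E (\<lambda>v X x. 1) a X i = hom_poly n m E a a X i i"
  unfolding nval_def hom_poly_def by simp

lemma mpnn_hom:
  assumes cont: "continuous_on UNIV \<sigma>" and np: "non_polynomial \<sigma>"
    and H: "is_multigraph_output m E a a" and sz: "size E \<le> 2"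
  shows "\<exists>F. mpnn \<sigma> n F \<and> (\<forall>X\<in>simple_adj n. \<forall>i<n. F X i = hom_poly n m E a a X i i)"
proof -
  define Y0 where "Y0 = (\<lambda>(X::nat\<Rightarrow>nat\<Rightarrow>real) (i::nat) (c::nat). if c = 0 then (1::real) else 0)"
  have Y0: "msem n 1 Y0" unfolding Y0_def by (rule ms_init)
  show ?thesis
  proof (cases "\<exists>e\<in>#E. fst e = snd e")
    case True
    then obtain e where e: "e \<in># E" "fst e = snd e" by blast
    obtain Y1 d1 where Y1: "mext n Y0 1 Y1 d1" "mcomp n Y1 d1 (\<lambda>X i. 0)" using mop_const[OF Y0] by blast
    have "mcomp n Y1 d1 (\<lambda>X i. hom_poly n m E a a X i i)"
    proof (rule mcomp_cong[OF Y1(2)], intro ballI allI impI)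
      fix X i assume X: "X \<in> simple_adj n" and "i < n"
      have z: "prod_mset (image_mset (\<lambda>e. X (\<phi> (fst e)) (\<phi> (snd e))) E) = 0" for \<phi>
      proof -
        have "X (\<phi> (fst e)) (\<phi> (snd e)) = 0" using X e(2) unfolding simple_adj_def by simp
        then have "0 \<in># image_mset (\<lambda>e. X (\<phi> (fst e)) (\<phi> (snd e))) E"
          unfolding in_image_mset using e(1) by (intro image_eqI[of _ _ e]) auto
        then show ?thesis by (simp only: prod_mset_zero_iff)
      qed
      have "hom_poly n m E a a X i i = (\<Sum>\<phi> \<in> {\<phi> \<in> PiE {..<m} (\<lambda>_. {..<n}). \<phi> a = i \<and> \<phi> a = i}.
          prod_mset (image_mset (\<lambda>e. X (\<phi> (fst e)) (\<phi> (snd e))) E))" unfolding hom_poly_def by simp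
      also have "\<dots> = 0" by (rule sum.neutral) (simp only: z, simp)
      finally show "0 = hom_poly n m E a a X i i" by simp
    qed
    then show ?thesis using mpnn_from_msem[OF cont np mext_msem[OF Y1(1)]] by blast
  next
    case False
    have lf: "\<forall>e\<in>#E. fst e \<noteq> snd e" using False by blast
    define N where "N = (\<lambda>(v::nat) (X::nat\<Rightarrow>nat\<Rightarrow>real) (x::nat). (1::real))"
    have labs: "\<forall>v\<in>{..<m}. mcomp n Y0 1 (N v)" unfolding mcomp_def Y0_def N_def by auto
    have ends: "\<forall>e\<in>#E. fst e \<in> {..<m} \<and> snd e \<in> {..<m}"
      using H unfolding is_multigraph_output_def by auto
    have am: "a \<in> {..<m}" using H unfolding is_multigraph_output_def by auto
    have cp: "card (spairs2 E) \<le> 2" using spairs2_card[of E] sz by linarith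
    obtain Y' d' where Y': "mext n Y0 1 Y' d'" "mcomp n Y' d' (nval n {..<m} E N a)"
      using mpattern_comp[where K = m and a = a and n = n, THEN spec[of _ "{..<m}"], THEN spec[of _ E],
          THEN spec[of _ N], THEN spec[of _ Y0], THEN spec[of _ 1],
          THEN mp, OF card_lessThan, THEN mp, OF finite_lessThan, THEN mp, OF am, THEN mp, OF ends,
          THEN mp, OF lf, THEN mp, OF cp, THEN mp, OF Y0, THEN mp, OF labs] by blast
    have "mcomp n Y' d' (\<lambda>X i. hom_poly n m E a a X i i)"
      by (rule mcomp_cong[OF Y'(2)]) (simp add: nval_hom N_def)
    then show ?thesis using mpnn_from_msem[OF cont np mext_msem[OF Y'(1)]] by blast
  qed
qed

theorem theorem3:
  fixes n :: nat and \<sigma> :: "real \<Rightarrow> real"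
  assumes "n \<ge> 1" and "continuous_on UNIV \<sigma>" and "non_polynomial \<sigma>"
  shows "(\<forall>m E a b \<epsilon>. is_multigraph_output m E a b \<and> a \<noteq> b \<and> size E \<le> 4 \<and> \<epsilon> > 0 \<longrightarrow>
            (\<exists>F. ppgn \<sigma> n F \<and> (\<forall>X \<in> simple_adj n. \<forall>i<n. \<forall>j<n.
                 \<bar>F X i j - hom_poly n m E a b X i j\<bar> < \<epsilon>)))
       \<and> (\<forall>m E a b \<epsilon>. is_multigraph_output m E a b \<and> a = b \<and> size E \<le> 5 \<and> \<epsilon> > 0 \<longrightarrow>
            (\<exists>F. ppgn \<sigma> n F \<and> (\<forall>X \<in> simple_adj n. \<forall>i<n.
                 \<bar>F X i i - hom_poly n m E a b X i i\<bar> < \<epsilon>)))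
       \<and> (\<forall>m E a b \<epsilon>. is_multigraph_output m E a b \<and> a = b \<and> size E \<le> 2 \<and> \<epsilon> > 0 \<longrightarrow>
            (\<exists>F. mpnn \<sigma> n F \<and> (\<forall>X \<in> simple_adj n. \<forall>i<n.
                 \<bar>F X i - hom_poly n m E a b X i i\<bar> < \<epsilon>)))"
proof (intro conjI allI impI)
  fix m E a b and \<epsilon> :: real
  assume h: "is_multigraph_output m E a b \<and> a \<noteq> b \<and> size E \<le> 4 \<and> \<epsilon> > 0"
  then have sz: "size E \<le> (if a = b then 5 else 4)" by simp
  obtain F where F: "ppgn \<sigma> n F" "\<forall>X\<in>simple_adj n. \<forall>i<n. \<forall>j<n. \<not> (a = b \<and> i \<noteq> j) \<longrightarrow> F X i j = hom_poly n m E a b X i j"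
    using ppgn_hom[OF assms(2,3) _ sz] h by blast
  show "\<exists>F. ppgn \<sigma> n F \<and> (\<forall>X \<in> simple_adj n. \<forall>i<n. \<forall>j<n. \<bar>F X i j - hom_poly n m E a b X i j\<bar> < \<epsilon>)"
    using F h by auto
next
  fix m E a b and \<epsilon> :: real
  assume h: "is_multigraph_output m E a b \<and> a = b \<and> size E \<le> 5 \<and> \<epsilon> > 0"
  then have sz: "size E \<le> (if a = b then 5 else 4)" by simp
  obtain F where F: "ppgn \<sigma> n F" "\<forall>X\<in>simple_adj n. \<forall>i<n. \<forall>j<n. \<not> (a = b \<and> i \<noteq> j) \<longrightarrow> F X i j = hom_poly n m E a b X i j"
    using ppgn_hom[OF assms(2,3) _ sz] h by blast
  show "\<exists>F. ppgn \<sigma> n F \<and> (\<forall>X \<in> simple_adj n. \<forall>i<n. \<bar>F X i i - hom_poly n m E a b X i i\<bar> < \<epsilon>)"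
    using F h by auto
next
  fix m E a b and \<epsilon> :: real
  assume h: "is_multigraph_output m E a b \<and> a = b \<and> size E \<le> 2 \<and> \<epsilon> > 0"
  then have "a = b" "is_multigraph_output m E a b" by auto
  then have H: "is_multigraph_output m E a a" by simp
  obtain F where F: "mpnn \<sigma> n F" "\<forall>X\<in>simple_adj n. \<forall>i<n. F X i = hom_poly n m E a a X i i"
    using mpnn_hom[OF assms(2,3) H] h by blast
  show "\<exists>F. mpnn \<sigma> n F \<and> (\<forall>X \<in> simple_adj n. \<forall>i<n. \<bar>F X i - hom_poly n m E a b X i i\<bar> < \<epsilon>)"
    using F h by auto
qed

end
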